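(* Suppose Assumption D holds, let $x$ be an allocation rule satisfying Assumption X, let $K\ge0$, and let $\mathcal{T}$ be the class of $K$-limited premium transfers. For each $i$ let $\theta_i^K:=\sup\{\theta\in\Theta:\int_{\underline\theta}^{\theta}X_i^{\min}(z)\,dz\le K\}$ and define $t_i^w,t_i^l:\Theta\to\mathbb{R}$ by $$(t_i^w(\theta),t_i^l(\theta))=\Big(\theta-\int_{\underline\theta}^{\theta}X_i^{\min}(z)dz,\ -\int_{\underline\theta}^{\theta}X_i^{\min}(z)dz\Big)\quad\text{if }\theta\le\theta_i^K,$$ $$(t_i^w(\theta),t_i^l(\theta))=\Big(\theta-K-\tfrac{1}{X_i^{\min}(\theta)}\Big(\int_{\underline\theta}^{\theta}X_i^{\min}(z)dz-K\Big),\ -K\Big)\quad\text{if }\theta>\theta_i^K,$$ and $t_i^*(\theta,\theta'):=t_i^w(\theta)x_i(\theta,\theta')+t_i^l(\theta)[1-x_i(\theta,\theta')]$. Then $t^*$ is the unique solution to the Reduced Problem (R), and hence a solution to the Optimal Transfer Problem (P), where: (P) is to maximize $\sum_i\int_\Theta T_i(\theta)dP(\theta)$ over transfer rules $t$ with $(x,t)$ feasible and $t\in\mathcal{T}$; (R) is to maximize the same objective over transfer rules $t$ that are win-lose dependent, satisfy $U_i^{\min}(\theta)=\int_{\underline\theta}^{\theta}X_i^{\min}(z)dz$ for all $i,\theta$, and $t\in\mathcal{T}$.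
   Context: $\Theta=[\underline\theta,\bar\theta]$ with $0<\underline\theta<\bar\theta$, Borel $\sigma$-algebra $\mathcal{B}$; "$\sigma$-algebra" means sub-$\sigma$-algebra of $\mathcal{B}$; $\Delta(\Theta,\mathcal{A})$ is the set of probability measures on $(\Theta,\mathcal{A})$; $P_{\mathcal{E}}$ is the restriction of $P$ to $\mathcal{E}$. A divergence $D$ assigns to each pair $Q,P$ of probability measures on a common $\sigma$-algebra a value $D(Q\|P)\in[0,\infty]$. Assumption D: for every $\sigma$-algebra $\mathcal{A}$, $P,Q\in\Delta(\Theta,\mathcal{A})$: (D1) $D(Q\|P)=0$ if $Q=P$; (D2) if $Q\ll P$ with bounded $dQ/dP$, $\epsilon\mapsto D(\epsilon Q+(1-\epsilon)P\|P)$ is continuous on $[0,1]$; (D3) $D(Q\|P)<\infty\Rightarrow Q\ll P$; (D4) $D(Q_{\mathcal{E}}\|P_{\mathcal{E}})\le D(Q\|P)$ for sub-$\sigma$-algebras $\mathcal{E}\subset\mathcal{A}$; (D5) equality in (D4) when $dQ_{\mathcal{E}}/dP_{\mathcal{E}}=dQ/dP$ $P$-a.e. Fix atomless $P\in\Delta(\Theta,\mathcal{B})$, $\eta>0$; "a.e." is w.r.t. $P$ or $P\otimes P$. Two bidders $i\in\{1,2\}$. An allocation rule is bounded measurable $x=(x_1,x_2):\Theta^2\to\mathbb{R}^2$ with $x_1(\theta,\theta')\ge0$, $x_2(\theta',\theta)\ge0$, $x_1(\theta,\theta')+x_2(\theta',\theta)\le1$; a transfer rule is bounded measurable $t=(t_1,t_2):\Theta^2\to\mathbb{R}^2$.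 $X_i(\theta)=\int x_i(\theta,\theta')dP(\theta')$, $X_i^{\min}(\theta)=\inf_Q\{\int x_i(\theta,\theta')dQ(\theta'):D(Q\|P)\le\eta\}$, $U_i^{\min}(\theta)=\inf_Q\{\int[\theta x_i(\theta,\theta')-t_i(\theta,\theta')]dQ(\theta'):D(Q\|P)\le\eta\}$, $T_i(\theta)=\int t_i(\theta,\theta')dP(\theta')$, $Q$ over $\Delta(\Theta,\mathcal{B})$. $(x,t)$ is incentive compatible if for all $i,\theta$, $\theta\in\arg\max_{\hat\theta}\inf_Q\{\int[\theta x_i(\hat\theta,\theta')-t_i(\hat\theta,\theta')]dQ(\theta'):D(Q\|P)\le\eta\}$; individually rational if $U_i^{\min}\ge0$; feasible if both. Assumption X: (i) $x_i(\theta,\theta')\in\{0,1\}$ for $\theta'\ne\theta$; (ii) $X_i(\theta)=1\Rightarrow\theta=\bar\theta$; (iii) $X_i^{\min}$ non-decreasing. $t$ is a $K$-limited premium transfer if for every $i$, every $\theta<\bar\theta$ and all $\theta^w,\theta^l$ with $x_i(\theta,\theta^w)=1$ and $x_i(\theta,\theta^l)=0$, $-t_i(\theta,\theta^l)\le K$. $t$ is win-lose dependent if there exist $t_i^w,t_i^l:\Theta\to\mathbb{R}$ with $t_i(\theta,\theta')=t_i^w(\theta)x_i(\theta,\theta')+t_i^l(\theta)[1-x_i(\theta,\theta')]$ and $\theta-t_i^w(\theta)\ge-t_i^l(\theta)$ for all $i,\theta,\theta'$. *)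

theory Defs
  imports "HOL-Analysis.Analysis" "HOL-Probability.Probability"
begin

(* Type space Theta = [lo, hi]; bidders are indexed by i \<in> {1,2} (i :: nat).
   x i th th' : allocation to bidder i when i's type is th and the opponent's type is th'.
   t i th th' : transfer of bidder i, same convention. *)

definition BTheta :: "real \<Rightarrow> real \<Rightarrow> real measure" where
  "BTheta lo hi = restrict_space borel {lo..hi}"

definition is_salg :: "real \<Rightarrow> real \<Rightarrow> real set set \<Rightarrow> bool" where
  "is_salg lo hi A \<longleftrightarrow> sigma_algebra {lo..hi} A \<and> A \<subseteq> sets (BTheta lo hi)"

definition Delta :: "real \<Rightarrow> real \<Rightarrow> real set set \<Rightarrow> real measure \<Rightarrow> bool" where
  "Delta lo hi A M \<longleftrightarrow> prob_space M \<and> space M = {lo..hi} \<and> sets M = A"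

definition mix :: "real \<Rightarrow> real measure \<Rightarrow> real measure \<Rightarrow> real measure" where
  "mix e Q P = measure_of (space P) (sets P)
      (\<lambda>S. ennreal e * emeasure Q S + ennreal (1 - e) * emeasure P S)"

definition restr :: "real measure \<Rightarrow> real set set \<Rightarrow> real measure" where
  "restr M E = measure_of (space M) E (emeasure M)"

(* Assumption D; D Q P stands for D(Q || P) *)
definition assumption_D ::
  "real \<Rightarrow> real \<Rightarrow> (real measure \<Rightarrow> real measure \<Rightarrow> ennreal) \<Rightarrow> bool" where
  "assumption_D lo hi D \<longleftrightarrow>
    (\<forall>A P Q. is_salg lo hi A \<longrightarrow> Delta lo hi A P \<longrightarrow> Delta lo hi A Q \<longrightarrow>
       (Q = P \<longrightarrow> D Q P = 0) \<and>
       (absolutely_continuous P Q \<and> (\<exists>c::real. AE z in P. RN_deriv P Q z \<le> ennreal c)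
          \<longrightarrow> continuous_on {0..1} (\<lambda>e. D (mix e Q P) P)) \<and>
       (D Q P < \<infinity> \<longrightarrow> absolutely_continuous P Q) \<and>
       (\<forall>E. is_salg lo hi E \<and> E \<subseteq> A \<longrightarrow>
          D (restr Q E) (restr P E) \<le> D Q P \<and>
          (absolutely_continuous P Q \<and>
           (AE z in P. RN_deriv (restr P E) (restr Q E) z = RN_deriv P Q z)
             \<longrightarrow> D (restr Q E) (restr P E) = D Q P)))"

definition Qset ::
  "real \<Rightarrow> real \<Rightarrow> real measure \<Rightarrow> (real measure \<Rightarrow> real measure \<Rightarrow> ennreal) \<Rightarrow> real
   \<Rightarrow> real measure set" where
  "Qset lo hi P D eta = {Q. Delta lo hi (sets (BTheta lo hi)) Q \<and> D Q P \<le> ennreal eta}"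

definition Xint :: "real measure \<Rightarrow> (nat \<Rightarrow> real \<Rightarrow> real \<Rightarrow> real) \<Rightarrow> nat \<Rightarrow> real \<Rightarrow> real" where
  "Xint P x i th = (\<integral>th'. x i th th' \<partial>P)"

definition Tint :: "real measure \<Rightarrow> (nat \<Rightarrow> real \<Rightarrow> real \<Rightarrow> real) \<Rightarrow> nat \<Rightarrow> real \<Rightarrow> real" where
  "Tint P t i th = (\<integral>th'. t i th th' \<partial>P)"

definition Xmin ::
  "real \<Rightarrow> real \<Rightarrow> real measure \<Rightarrow> (real measure \<Rightarrow> real measure \<Rightarrow> ennreal) \<Rightarrow> real
   \<Rightarrow> (nat \<Rightarrow> real \<Rightarrow> real \<Rightarrow> real) \<Rightarrow> nat \<Rightarrow> real \<Rightarrow> real" where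
  "Xmin lo hi P D eta x i th = Inf ((\<lambda>Q. \<integral>th'. x i th th' \<partial>Q) ` Qset lo hi P D eta)"

definition Vrep ::
  "real \<Rightarrow> real \<Rightarrow> real measure \<Rightarrow> (real measure \<Rightarrow> real measure \<Rightarrow> ennreal) \<Rightarrow> real
   \<Rightarrow> (nat \<Rightarrow> real \<Rightarrow> real \<Rightarrow> real) \<Rightarrow> (nat \<Rightarrow> real \<Rightarrow> real \<Rightarrow> real)
   \<Rightarrow> nat \<Rightarrow> real \<Rightarrow> real \<Rightarrow> real" where
  "Vrep lo hi P D eta x t i th rep =
     Inf ((\<lambda>Q. \<integral>th'. th * x i rep th' - t i rep th' \<partial>Q) ` Qset lo hi P D eta)"

definition Umin ::
  "real \<Rightarrow> real \<Rightarrow> real measure \<Rightarrow> (real measure \<Rightarrow> real measure \<Rightarrow> ennreal) \<Rightarrow> real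
   \<Rightarrow> (nat \<Rightarrow> real \<Rightarrow> real \<Rightarrow> real) \<Rightarrow> (nat \<Rightarrow> real \<Rightarrow> real \<Rightarrow> real)
   \<Rightarrow> nat \<Rightarrow> real \<Rightarrow> real" where
  "Umin lo hi P D eta x t i th =
     Inf ((\<lambda>Q. \<integral>th'. th * x i th th' - t i th th' \<partial>Q) ` Qset lo hi P D eta)"

definition bdd_meas2 :: "real \<Rightarrow> real \<Rightarrow> (nat \<Rightarrow> real \<Rightarrow> real \<Rightarrow> real) \<Rightarrow> bool" where
  "bdd_meas2 lo hi f \<longleftrightarrow> (\<forall>i\<in>{1,2::nat}.
     (\<lambda>(a,b). f i a b) \<in> borel_measurable (BTheta lo hi \<Otimes>\<^sub>M BTheta lo hi) \<and>
     (\<exists>B. \<forall>a\<in>{lo..hi}. \<forall>b\<in>{lo..hi}. \<bar>f i a b\<bar> \<le> B))"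

definition allocation_rule :: "real \<Rightarrow> real \<Rightarrow> (nat \<Rightarrow> real \<Rightarrow> real \<Rightarrow> real) \<Rightarrow> bool" where
  "allocation_rule lo hi x \<longleftrightarrow> bdd_meas2 lo hi x \<and>
     (\<forall>a\<in>{lo..hi}. \<forall>b\<in>{lo..hi}. x 1 a b \<ge> 0 \<and> x 2 b a \<ge> 0 \<and> x 1 a b + x 2 b a \<le> 1)"

definition transfer_rule :: "real \<Rightarrow> real \<Rightarrow> (nat \<Rightarrow> real \<Rightarrow> real \<Rightarrow> real) \<Rightarrow> bool" where
  "transfer_rule lo hi t \<longleftrightarrow> bdd_meas2 lo hi t"

definition incentive_compatible ::
  "real \<Rightarrow> real \<Rightarrow> real measure \<Rightarrow> (real measure \<Rightarrow> real measure \<Rightarrow> ennreal) \<Rightarrow> real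
   \<Rightarrow> (nat \<Rightarrow> real \<Rightarrow> real \<Rightarrow> real) \<Rightarrow> (nat \<Rightarrow> real \<Rightarrow> real \<Rightarrow> real) \<Rightarrow> bool" where
  "incentive_compatible lo hi P D eta x t \<longleftrightarrow>
     (\<forall>i\<in>{1,2::nat}. \<forall>th\<in>{lo..hi}. \<forall>rep\<in>{lo..hi}.
        Vrep lo hi P D eta x t i th rep \<le> Vrep lo hi P D eta x t i th th)"

definition individually_rational ::
  "real \<Rightarrow> real \<Rightarrow> real measure \<Rightarrow> (real measure \<Rightarrow> real measure \<Rightarrow> ennreal) \<Rightarrow> real
   \<Rightarrow> (nat \<Rightarrow> real \<Rightarrow> real \<Rightarrow> real) \<Rightarrow> (nat \<Rightarrow> real \<Rightarrow> real \<Rightarrow> real) \<Rightarrow> bool" where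
  "individually_rational lo hi P D eta x t \<longleftrightarrow>
     (\<forall>i\<in>{1,2::nat}. \<forall>th\<in>{lo..hi}. Umin lo hi P D eta x t i th \<ge> 0)"

definition feasible ::
  "real \<Rightarrow> real \<Rightarrow> real measure \<Rightarrow> (real measure \<Rightarrow> real measure \<Rightarrow> ennreal) \<Rightarrow> real
   \<Rightarrow> (nat \<Rightarrow> real \<Rightarrow> real \<Rightarrow> real) \<Rightarrow> (nat \<Rightarrow> real \<Rightarrow> real \<Rightarrow> real) \<Rightarrow> bool" where
  "feasible lo hi P D eta x t \<longleftrightarrow>
     incentive_compatible lo hi P D eta x t \<and> individually_rational lo hi P D eta x t"

definition assumption_X ::
  "real \<Rightarrow> real \<Rightarrow> real measure \<Rightarrow> (real measure \<Rightarrow> real measure \<Rightarrow> ennreal) \<Rightarrow> real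
   \<Rightarrow> (nat \<Rightarrow> real \<Rightarrow> real \<Rightarrow> real) \<Rightarrow> bool" where
  "assumption_X lo hi P D eta x \<longleftrightarrow> (\<forall>i\<in>{1,2::nat}.
     (\<forall>th\<in>{lo..hi}. \<forall>th'\<in>{lo..hi}. th' \<noteq> th \<longrightarrow> x i th th' \<in> {0,1}) \<and>
     (\<forall>th\<in>{lo..hi}. Xint P x i th = 1 \<longrightarrow> th = hi) \<and>
     mono_on {lo..hi} (Xmin lo hi P D eta x i))"

definition K_limited ::
  "real \<Rightarrow> real \<Rightarrow> (nat \<Rightarrow> real \<Rightarrow> real \<Rightarrow> real) \<Rightarrow> real \<Rightarrow> (nat \<Rightarrow> real \<Rightarrow> real \<Rightarrow> real) \<Rightarrow> bool" where
  "K_limited lo hi x K t \<longleftrightarrow> (\<forall>i\<in>{1,2::nat}. \<forall>th\<in>{lo..hi}. th < hi \<longrightarrow>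
     (\<forall>thw\<in>{lo..hi}. \<forall>thl\<in>{lo..hi}. x i th thw = 1 \<and> x i th thl = 0 \<longrightarrow> - t i th thl \<le> K))"

definition win_lose_dependent ::
  "real \<Rightarrow> real \<Rightarrow> (nat \<Rightarrow> real \<Rightarrow> real \<Rightarrow> real) \<Rightarrow> (nat \<Rightarrow> real \<Rightarrow> real \<Rightarrow> real) \<Rightarrow> bool" where
  "win_lose_dependent lo hi x t \<longleftrightarrow> (\<exists>tw tl :: nat \<Rightarrow> real \<Rightarrow> real.
     \<forall>i\<in>{1,2::nat}. \<forall>th\<in>{lo..hi}. \<forall>th'\<in>{lo..hi}.
       t i th th' = tw i th * x i th th' + tl i th * (1 - x i th th') \<and>
       th - tw i th \<ge> - tl i th)"

definition objective :: "real measure \<Rightarrow> (nat \<Rightarrow> real \<Rightarrow> real \<Rightarrow> real) \<Rightarrow> real" where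
  "objective P t = (\<Sum>i\<in>{1,2::nat}. \<integral>th. Tint P t i th \<partial>P)"

definition solves_P ::
  "real \<Rightarrow> real \<Rightarrow> real measure \<Rightarrow> (real measure \<Rightarrow> real measure \<Rightarrow> ennreal) \<Rightarrow> real
   \<Rightarrow> (nat \<Rightarrow> real \<Rightarrow> real \<Rightarrow> real) \<Rightarrow> real \<Rightarrow> (nat \<Rightarrow> real \<Rightarrow> real \<Rightarrow> real) \<Rightarrow> bool" where
  "solves_P lo hi P D eta x K t \<longleftrightarrow>
     (let adm = (\<lambda>s. transfer_rule lo hi s \<and> feasible lo hi P D eta x s \<and> K_limited lo hi x K s)
      in adm t \<and> (\<forall>s. adm s \<longrightarrow> objective P s \<le> objective P t))"

definition solves_R ::
  "real \<Rightarrow> real \<Rightarrow> real measure \<Rightarrow> (real measure \<Rightarrow> real measure \<Rightarrow> ennreal) \<Rightarrow> real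
   \<Rightarrow> (nat \<Rightarrow> real \<Rightarrow> real \<Rightarrow> real) \<Rightarrow> real \<Rightarrow> (nat \<Rightarrow> real \<Rightarrow> real \<Rightarrow> real) \<Rightarrow> bool" where
  "solves_R lo hi P D eta x K t \<longleftrightarrow>
     (let adm = (\<lambda>s. transfer_rule lo hi s \<and> win_lose_dependent lo hi x s \<and>
                   (\<forall>i\<in>{1,2::nat}. \<forall>th\<in>{lo..hi}.
                      Umin lo hi P D eta x s i th = integral {lo..th} (Xmin lo hi P D eta x i)) \<and>
                   K_limited lo hi x K s)
      in adm t \<and> (\<forall>s. adm s \<longrightarrow> objective P s \<le> objective P t))"

definition thetaK ::
  "real \<Rightarrow> real \<Rightarrow> real measure \<Rightarrow> (real measure \<Rightarrow> real measure \<Rightarrow> ennreal) \<Rightarrow> real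
   \<Rightarrow> (nat \<Rightarrow> real \<Rightarrow> real \<Rightarrow> real) \<Rightarrow> real \<Rightarrow> nat \<Rightarrow> real" where
  "thetaK lo hi P D eta x K i =
     Sup {th \<in> {lo..hi}. integral {lo..th} (Xmin lo hi P D eta x i) \<le> K}"

definition tw_star ::
  "real \<Rightarrow> real \<Rightarrow> real measure \<Rightarrow> (real measure \<Rightarrow> real measure \<Rightarrow> ennreal) \<Rightarrow> real
   \<Rightarrow> (nat \<Rightarrow> real \<Rightarrow> real \<Rightarrow> real) \<Rightarrow> real \<Rightarrow> nat \<Rightarrow> real \<Rightarrow> real" where
  "tw_star lo hi P D eta x K i th =
     (if th \<le> thetaK lo hi P D eta x K i
      then th - integral {lo..th} (Xmin lo hi P D eta x i)
      else th - K - (1 / Xmin lo hi P D eta x i th) *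
                      (integral {lo..th} (Xmin lo hi P D eta x i) - K))"

definition tl_star ::
  "real \<Rightarrow> real \<Rightarrow> real measure \<Rightarrow> (real measure \<Rightarrow> real measure \<Rightarrow> ennreal) \<Rightarrow> real
   \<Rightarrow> (nat \<Rightarrow> real \<Rightarrow> real \<Rightarrow> real) \<Rightarrow> real \<Rightarrow> nat \<Rightarrow> real \<Rightarrow> real" where
  "tl_star lo hi P D eta x K i th =
     (if th \<le> thetaK lo hi P D eta x K i
      then - integral {lo..th} (Xmin lo hi P D eta x i)
      else - K)"

definition t_star ::
  "real \<Rightarrow> real \<Rightarrow> real measure \<Rightarrow> (real measure \<Rightarrow> real measure \<Rightarrow> ennreal) \<Rightarrow> real
   \<Rightarrow> (nat \<Rightarrow> real \<Rightarrow> real \<Rightarrow> real) \<Rightarrow> real \<Rightarrow> nat \<Rightarrow> real \<Rightarrow> real \<Rightarrow> real" where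
  "t_star lo hi P D eta x K i th th' =
     tw_star lo hi P D eta x K i th * x i th th' + tl_star lo hi P D eta x K i th * (1 - x i th th')"

end

theory Submission
  imports Defs
begin

lemma Inf_affine:
  fixes f :: "'a \<Rightarrow> real"
  assumes ne: "S \<noteq> {}" and bdd: "\<And>q. q \<in> S \<Longrightarrow> m \<le> f q" and a: "a \<ge> 0"
  shows "Inf ((\<lambda>q. c + a * f q) ` S) = c + a * Inf (f ` S)"
proof -
  have bf: "bdd_below (f ` S)" by (rule bdd_belowI2) (rule bdd)
  have b2: "bdd_below ((\<lambda>q. c + a * f q) ` S)"
    using bdd a by (intro bdd_belowI2[where m="c + a * m"]) (auto intro: mult_left_mono)
  show ?thesis
  proof (cases "a = 0")
    case True thus ?thesis using ne by simp
  next
    case False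
    hence ap: "a > 0" using a by simp
    have "c + a * Inf (f ` S) \<le> Inf ((\<lambda>q. c + a * f q) ` S)"
      using ne bf ap by (intro cInf_greatest) (auto intro!: mult_left_mono cInf_lower)
    moreover have "(Inf ((\<lambda>q. c + a * f q) ` S) - c) / a \<le> Inf (f ` S)"
    proof (intro cInf_greatest)
      show "f ` S \<noteq> {}" using ne by simp
      fix y assume "y \<in> f ` S"
      then obtain q where q: "q \<in> S" "y = f q" by auto
      have "Inf ((\<lambda>q. c + a * f q) ` S) \<le> c + a * f q" using q b2 by (auto intro: cInf_lower)
      thus "(Inf ((\<lambda>q. c + a * f q) ` S) - c) / a \<le> y" using ap q by (simp add: field_simps)
    qed
    hence "Inf ((\<lambda>q. c + a * f q) ` S) \<le> c + a * Inf (f ` S)" using ap by (simp add: field_simps)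
    ultimately show ?thesis by linarith
  qed
qed

lemma envelope_int:
  fixes f g :: "real \<Rightarrow> real"
  assumes ab: "a \<le> b" and mono: "mono_on {a..b} g"
    and inc: "\<And>r s. a \<le> r \<Longrightarrow> r \<le> s \<Longrightarrow> s \<le> b \<Longrightarrow> (s - r) * g r \<le> f s - f r"
  shows "integral {a..b} g \<le> f b - f a"
proof -
  have gi: "g integrable_on {c..d}" if "a \<le> c" "d \<le> b" for c d
  proof -
    have "mono_on {c..d} g" using mono that by (auto intro: mono_on_subset)
    thus ?thesis by (rule integrable_on_mono_on)
  qed
  have key: "integral {a..a + real n * h} g \<le> f (a + real n * h) - f a + h * (g (a + real n * h) - g a)"
    if h: "h > 0" "a + real n * h \<le> b" for n h
    using h(2)
  proof (induction n)
    case 0 thus ?case by simp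
  next
    case (Suc n)
    let ?c = "a + real n * h" and ?d = "a + real (Suc n) * h"
    have cd: "?c \<le> ?d" "a \<le> ?c" using h by (auto simp: algebra_simps)
    have db: "?d \<le> b" using Suc by simp
    have cb: "?c \<le> b" using cd db by linarith
    have IH: "integral {a..?c} g \<le> f ?c - f a + h * (g ?c - g a)" using Suc cb by simp
    have split: "integral {a..?d} g = integral {a..?c} g + integral {?c..?d} g"
      using Henstock_Kurzweil_Integration.integral_combine[OF cd(2) cd(1) gi[OF order.refl db]] by simp
    have "integral {?c..?d} g \<le> integral {?c..?d} (\<lambda>_. g ?d)"
    proof (rule integral_le)
      show "g integrable_on {?c..?d}" using gi cd db by simp
      show "(\<lambda>_. g ?d) integrable_on {?c..?d}" by (rule integrable_const_ivl)
      fix z assume "z \<in> {?c..?d}"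
      hence "z \<in> {a..b}" "?d \<in> {a..b}" "z \<le> ?d" using cd db by auto
      thus "g z \<le> g ?d" using mono by (simp add: mono_onD)
    qed
    also have "\<dots> = h * g ?d" using cd by (simp add: algebra_simps)
    finally have seg: "integral {?c..?d} g \<le> h * g ?d" .
    have fi: "h * g ?c \<le> f ?d - f ?c" using inc[OF cd(2) cd(1) db] by (simp add: algebra_simps)
    show ?case using split seg fi IH by (simp add: algebra_simps)
  qed
  show ?thesis
  proof (cases "a = b")
    case True thus ?thesis by simp
  next
    case False
    hence ab': "a < b" using ab by simp
    have gab: "g a \<le> g b" using mono ab by (auto intro: mono_onD)
    show ?thesis
    proof (rule ccontr)
      assume "\<not> ?thesis"
      hence eps: "integral {a..b} g - (f b - f a) > 0" by simp
      define E where "E = integral {a..b} g - (f b - f a)"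
      have Ep: "E > 0" using eps by (simp add: E_def)
      have C: "(b - a) * (g b - g a) \<ge> 0" using ab gab by simp
      obtain n :: nat where nn: "real n > (b - a) * (g b - g a) / E"
        using reals_Archimedean2 by blast
      have npos: "real n > 0" using nn C Ep by (meson divide_nonneg_pos le_less_trans)
      have "(b - a) * (g b - g a) < real n * E" using nn Ep by (simp add: pos_divide_less_eq mult.commute)
      hence lt: "(b - a) * (g b - g a) / real n < E" using npos by (simp add: divide_less_eq mult.commute)
      have n: "n > 0" "(b - a) * (g b - g a) / real n < integral {a..b} g - (f b - f a)"
        using npos lt by (auto simp: E_def)
      define h where "h = (b - a) / real n"
      have hp: "h > 0" using n ab' by (simp add: h_def)
      have e: "a + real n * h = b" using n by (simp add: h_def)
      have "integral {a..b} g \<le> f b - f a + h * (g b - g a)" using key[OF hp, of n] e by simp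
      moreover have "h * (g b - g a) = (b - a) * (g b - g a) / real n" by (simp add: h_def)
      ultimately show False using n by linarith
    qed
  qed
qed

locale ctx =
  fixes lo hi :: real and P :: "real measure"
    and D :: "real measure \<Rightarrow> real measure \<Rightarrow> ennreal"
    and eta :: real and x :: "nat \<Rightarrow> real \<Rightarrow> real \<Rightarrow> real" and K :: real
  assumes lo_pos: "0 < lo" and lohi: "lo < hi"
    and PD: "Delta lo hi (sets (BTheta lo hi)) P"
    and atoml: "\<forall>th. emeasure P {th} = 0"
    and eta: "eta > 0" and AD: "assumption_D lo hi D"
    and AR: "allocation_rule lo hi x" and AX: "assumption_X lo hi P D eta x"
    and K: "K \<ge> 0"
begin

abbreviation "B \<equiv> BTheta lo hi"
abbreviation "QS \<equiv> Qset lo hi P D eta"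
abbreviation "Xm \<equiv> Xmin lo hi P D eta x"
abbreviation "XX \<equiv> Xint P x"
definition "U i th = integral {lo..th} (Xm i)"

lemma space_B[simp]: "space B = {lo..hi}"
  by (simp add: BTheta_def)

lemma P_prob: "prob_space P" and space_P[simp]: "space P = {lo..hi}" and sets_P: "sets P = sets B"
  using PD by (auto simp: Delta_def)

lemma salgB: "is_salg lo hi (sets B)"
  unfolding is_salg_def using sets.sigma_algebra_axioms[of B] by simp

lemma DB: "Delta lo hi (sets B) P" using PD .

lemma QS_D:
  assumes "Q \<in> QS"
  shows "prob_space Q" "space Q = {lo..hi}" "sets Q = sets B" "D Q P \<le> ennreal eta"
    "absolutely_continuous P Q" "Delta lo hi (sets B) Q"
proof -
  show DQ: "Delta lo hi (sets B) Q" using assms by (simp add: Qset_def)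
  thus "prob_space Q" "space Q = {lo..hi}" "sets Q = sets B" by (auto simp: Delta_def)
  show le: "D Q P \<le> ennreal eta" using assms by (simp add: Qset_def)
  have "D Q P < \<infinity>" using le by (simp add: le_less_trans)
  thus "absolutely_continuous P Q" using AD salgB DB DQ unfolding assumption_D_def by blast
qed

lemma P_QS: "P \<in> QS"
proof -
  have "D P P = 0" using AD salgB DB unfolding assumption_D_def by blast
  thus ?thesis using DB eta by (simp add: Qset_def)
qed

lemma QS_ne: "QS \<noteq> {}" using P_QS by auto

lemma meas_B_to:
  assumes "f \<in> borel_measurable B" "sets M = sets B"
  shows "f \<in> borel_measurable M"
  using assms measurable_cong_sets by blast

lemma sec_meas:
  assumes "bdd_meas2 lo hi s" "i \<in> {1,2}" "th \<in> {lo..hi}"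
  shows "s i th \<in> borel_measurable B"
proof -
  have "(\<lambda>(a,b). s i a b) \<in> borel_measurable (B \<Otimes>\<^sub>M B)" using assms unfolding bdd_meas2_def by blast
  from measurable_Pair2[OF this, of th] show ?thesis using assms by simp
qed

lemma sec_bound:
  assumes "bdd_meas2 lo hi s" "i \<in> {1,2}"
  obtains C where "\<And>a b. a \<in> {lo..hi} \<Longrightarrow> b \<in> {lo..hi} \<Longrightarrow> \<bar>s i a b\<bar> \<le> C"
  using assms unfolding bdd_meas2_def by blast

lemma x_meas: "i \<in> {1,2} \<Longrightarrow> th \<in> {lo..hi} \<Longrightarrow> x i th \<in> borel_measurable B"
  using AR sec_meas by (simp add: allocation_rule_def)

lemma x_bounds:
  assumes "i \<in> {1,2}" "a \<in> {lo..hi}" "b \<in> {lo..hi}"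
  shows "0 \<le> x i a b" "x i a b \<le> 1"
proof -
  have H: "\<And>a b. a \<in> {lo..hi} \<Longrightarrow> b \<in> {lo..hi} \<Longrightarrow> x 1 a b \<ge> 0 \<and> x 2 b a \<ge> 0 \<and> x 1 a b + x 2 b a \<le> 1"
    using AR by (simp add: allocation_rule_def)
  show "0 \<le> x i a b" using H[of a b] H[of b a] assms by auto
  show "x i a b \<le> 1" using H[of a b] H[of b a] assms by auto
qed

lemma integrable_QS:
  fixes f :: "real \<Rightarrow> real" and C :: real
  assumes "Q \<in> QS" "f \<in> borel_measurable B" "\<And>z. z \<in> {lo..hi} \<Longrightarrow> \<bar>f z\<bar> \<le> C"
  shows "integrable Q f"
proof -
  interpret prob_space Q using QS_D[OF assms(1)] by simp
  show ?thesis
  proof (rule integrable_const_bound[where B=C])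
    show "AE z in Q. norm (f z) \<le> C" using assms QS_D[OF assms(1)] by (intro AE_I2) auto
    show "f \<in> borel_measurable Q" using meas_B_to assms QS_D[OF assms(1)] by blast
  qed
qed

lemma integrable_x: "Q \<in> QS \<Longrightarrow> i \<in> {1,2} \<Longrightarrow> th \<in> {lo..hi} \<Longrightarrow> integrable Q (x i th)"
proof -
  assume a: "Q \<in> QS" "i \<in> {1,2}" "th \<in> {lo..hi}"
  show ?thesis
  proof (rule integrable_QS[where C=1])
    fix z assume "z \<in> {lo..hi}"
    thus "\<bar>x i th z\<bar> \<le> 1" using x_bounds[OF a(2,3), of z] by simp
  qed (use a x_meas in auto)
qed

lemma int_x_bounds:
  assumes "Q \<in> QS" "i \<in> {1,2}" "th \<in> {lo..hi}"
  shows "0 \<le> (\<integral>z. x i th z \<partial>Q)" "(\<integral>z. x i th z \<partial>Q) \<le> 1"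
proof -
  interpret prob_space Q using QS_D[OF assms(1)] by simp
  have sp: "space Q = {lo..hi}" using QS_D[OF assms(1)] by simp
  show "0 \<le> (\<integral>z. x i th z \<partial>Q)" using assms sp x_bounds by (intro Bochner_Integration.integral_nonneg) auto
  have "(\<integral>z. x i th z \<partial>Q) \<le> (\<integral>z. 1 \<partial>Q)"
    using assms sp x_bounds integrable_x by (intro integral_mono) auto
  thus "(\<integral>z. x i th z \<partial>Q) \<le> 1" using prob_space by simp
qed

lemma Xm_le: "Q \<in> QS \<Longrightarrow> i \<in> {1,2} \<Longrightarrow> th \<in> {lo..hi} \<Longrightarrow> Xm i th \<le> (\<integral>z. x i th z \<partial>Q)"
  unfolding Xmin_def
  by (rule cInf_lower) (auto intro!: bdd_belowI2[where m=0] int_x_bounds)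

lemma Xm_ge: "i \<in> {1,2} \<Longrightarrow> th \<in> {lo..hi} \<Longrightarrow> (\<And>Q. Q \<in> QS \<Longrightarrow> c \<le> (\<integral>z. x i th z \<partial>Q)) \<Longrightarrow> c \<le> Xm i th"
  unfolding Xmin_def using QS_ne by (intro cInf_greatest) auto

lemma Xm_bounds:
  assumes "i \<in> {1,2}" "th \<in> {lo..hi}"
  shows "0 \<le> Xm i th" "Xm i th \<le> XX i th" "XX i th \<le> 1" "Xm i th \<le> 1"
proof -
  show "0 \<le> Xm i th" using assms int_x_bounds by (intro Xm_ge) auto
  show "Xm i th \<le> XX i th" using Xm_le[OF P_QS assms] by (simp add: Xint_def)
  show "XX i th \<le> 1" using int_x_bounds[OF P_QS assms] by (simp add: Xint_def)
  thus "Xm i th \<le> 1" using \<open>Xm i th \<le> XX i th\<close> by simp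
qed

lemma AXi:
  assumes "i \<in> {1,2}"
  shows "\<And>th th'. th \<in> {lo..hi} \<Longrightarrow> th' \<in> {lo..hi} \<Longrightarrow> th' \<noteq> th \<Longrightarrow> x i th th' \<in> {0,1}"
    "\<And>th. th \<in> {lo..hi} \<Longrightarrow> XX i th = 1 \<Longrightarrow> th = hi"
    "mono_on {lo..hi} (Xm i)"
proof -
  have H: "(\<forall>th\<in>{lo..hi}. \<forall>th'\<in>{lo..hi}. th' \<noteq> th \<longrightarrow> x i th th' \<in> {0,1}) \<and>
     (\<forall>th\<in>{lo..hi}. XX i th = 1 \<longrightarrow> th = hi) \<and> mono_on {lo..hi} (Xm i)"
    using AX assms unfolding assumption_X_def by (metis (no_types, lifting))
  thus "\<And>th th'. th \<in> {lo..hi} \<Longrightarrow> th' \<in> {lo..hi} \<Longrightarrow> th' \<noteq> th \<Longrightarrow> x i th th' \<in> {0,1}"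
    "\<And>th. th \<in> {lo..hi} \<Longrightarrow> XX i th = 1 \<Longrightarrow> th = hi"
    "mono_on {lo..hi} (Xm i)" by blast+
qed

lemma Xm_mono: "i \<in> {1,2} \<Longrightarrow> mono_on {lo..hi} (Xm i)"
  using AXi(3) .

lemma Xm_int: "i \<in> {1,2} \<Longrightarrow> lo \<le> a \<Longrightarrow> b \<le> hi \<Longrightarrow> Xm i integrable_on {a..b}"
  by (rule integrable_on_mono_on) (auto intro: mono_on_subset[OF Xm_mono])

lemma U_lo[simp]: "U i lo = 0" by (simp add: U_def)

lemma U_diff:
  assumes i: "i \<in> {1,2}" and rs: "lo \<le> r" "r \<le> s" "s \<le> hi"
  shows "U i s - U i r = integral {r..s} (Xm i)"
    "(s - r) * Xm i r \<le> U i s - U i r" "U i s - U i r \<le> (s - r) * Xm i s"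
proof -
  have c: "integral {lo..s} (Xm i) = integral {lo..r} (Xm i) + integral {r..s} (Xm i)"
    using Henstock_Kurzweil_Integration.integral_combine[OF rs(1,2) Xm_int[OF i order.refl rs(3)]] by simp
  thus e: "U i s - U i r = integral {r..s} (Xm i)" by (simp add: U_def)
  have "integral {r..s} (\<lambda>_. Xm i r) \<le> integral {r..s} (Xm i)"
  proof (rule integral_le)
    show "Xm i integrable_on {r..s}" using Xm_int[OF i] rs by simp
    fix z assume "z \<in> {r..s}"
    hence "z \<in> {lo..hi}" "r \<in> {lo..hi}" "r \<le> z" using rs by auto
    thus "Xm i r \<le> Xm i z" using Xm_mono[OF i] by (simp add: mono_onD)
  qed (rule integrable_const_ivl)
  thus "(s - r) * Xm i r \<le> U i s - U i r" using e rs by simp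
  have "integral {r..s} (Xm i) \<le> integral {r..s} (\<lambda>_. Xm i s)"
  proof (rule integral_le)
    show "Xm i integrable_on {r..s}" using Xm_int[OF i] rs by simp
    fix z assume "z \<in> {r..s}"
    hence "z \<in> {lo..hi}" "s \<in> {lo..hi}" "z \<le> s" using rs by auto
    thus "Xm i z \<le> Xm i s" using Xm_mono[OF i] by (simp add: mono_onD)
  qed (rule integrable_const_ivl)
  thus "U i s - U i r \<le> (s - r) * Xm i s" using e rs by simp
qed

lemma U_nonneg: "i \<in> {1,2} \<Longrightarrow> th \<in> {lo..hi} \<Longrightarrow> 0 \<le> U i th"
proof -
  assume a: "i \<in> {1,2}" "th \<in> {lo..hi}"
  have "0 \<le> (th - lo) * Xm i lo" using a Xm_bounds[of i lo] lohi by (intro mult_nonneg_nonneg) auto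
  thus ?thesis using U_diff(2)[of i lo th] a by simp
qed

lemma U_le: "i \<in> {1,2} \<Longrightarrow> th \<in> {lo..hi} \<Longrightarrow> U i th \<le> (th - lo) * Xm i th"
  using U_diff(3)[of i lo th] by simp

lemma U_mono: "i \<in> {1,2} \<Longrightarrow> lo \<le> r \<Longrightarrow> r \<le> s \<Longrightarrow> s \<le> hi \<Longrightarrow> U i r \<le> U i s"
  using U_diff(2)[of i r s] Xm_bounds[of i r] by (smt (verit) atLeastAtMost_iff mult_nonneg_nonneg)

lemma U_bound: "i \<in> {1,2} \<Longrightarrow> th \<in> {lo..hi} \<Longrightarrow> U i th \<le> hi - lo"
proof -
  assume a: "i \<in> {1,2}" "th \<in> {lo..hi}"
  have "(th - lo) * Xm i th \<le> (th - lo) * 1" using Xm_bounds[OF a] a by (intro mult_left_mono) auto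
  thus ?thesis using U_le[OF a] a by simp
qed

lemma U_cont: "i \<in> {1,2} \<Longrightarrow> continuous_on {lo..hi} (U i)"
  unfolding U_def[abs_def] by (rule indefinite_integral_continuous_1) (rule Xm_int, auto)

end

context ctx begin

abbreviation "thK i \<equiv> thetaK lo hi P D eta x K i"
abbreviation "twS i \<equiv> tw_star lo hi P D eta x K i"
abbreviation "tlS i \<equiv> tl_star lo hi P D eta x K i"
abbreviation "ts \<equiv> t_star lo hi P D eta x K"
definition "ast i th = th - twS i th + tlS i th"

definition "SK i = {th \<in> {lo..hi}. U i th \<le> K}"

lemma thK_eq: "thK i = Sup (SK i)"
  by (simp add: thetaK_def SK_def U_def)

lemma SK_props:
  assumes i: "i \<in> {1,2}"
  shows "lo \<in> SK i" "bdd_above (SK i)" "closed (SK i)" "thK i \<in> SK i"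
proof -
  show l: "lo \<in> SK i" using lohi K by (simp add: SK_def)
  show b: "bdd_above (SK i)" by (rule bdd_aboveI[where M=hi]) (auto simp: SK_def)
  have "SK i = {lo..hi} \<inter> U i -` {..K}" by (auto simp: SK_def)
  moreover have "closed ({lo..hi} \<inter> U i -` {..K})"
    by (rule continuous_closed_preimage[OF U_cont[OF i]]) auto
  ultimately show c: "closed (SK i)" by simp
  show "thK i \<in> SK i" unfolding thK_eq using l b c by (intro closed_contains_Sup) auto
qed

lemma thK_in: "i \<in> {1,2} \<Longrightarrow> thK i \<in> {lo..hi}"
  using SK_props(4) by (auto simp: SK_def)

lemma le_thK: "i \<in> {1,2} \<Longrightarrow> th \<in> {lo..hi} \<Longrightarrow> th \<le> thK i \<Longrightarrow> U i th \<le> K"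
  using SK_props(4)[of i] U_mono[of i th "thK i"] by (auto simp: SK_def)

lemma gt_thK:
  assumes i: "i \<in> {1,2}" and th: "th \<in> {lo..hi}" and g: "th > thK i"
  shows "U i th > K" "Xm i th > 0"
proof -
  show UK: "U i th > K"
  proof (rule ccontr)
    assume "\<not> U i th > K"
    hence "th \<in> SK i" using th by (simp add: SK_def)
    hence "th \<le> thK i" unfolding thK_eq using SK_props(2)[OF i] by (rule cSup_upper)
    thus False using g by simp
  qed
  have "0 < U i th" using UK K by simp
  also have "\<dots> \<le> (th - lo) * Xm i th" using U_le[OF i th] .
  finally show "Xm i th > 0" using th Xm_bounds(1)[OF i th]
    by (metis less_eq_real_def mult_zero_right zero_less_mult_pos2)
qed

lemma ast_tl:
  assumes i: "i \<in> {1,2}" and th: "th \<in> {lo..hi}"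
  shows "ast i th = (if th \<le> thK i then 0 else (U i th - K) / Xm i th)"
    "tlS i th = ast i th * Xm i th - U i th"
    "tlS i th = (if th \<le> thK i then - U i th else - K)"
    "0 \<le> ast i th" "ast i th \<le> hi - lo" "- tlS i th \<le> K"
    "\<bar>tlS i th\<bar> \<le> K + (hi - lo)"
proof -
  show a: "ast i th = (if th \<le> thK i then 0 else (U i th - K) / Xm i th)"
    by (simp add: ast_def tw_star_def tl_star_def U_def)
  show tl: "tlS i th = (if th \<le> thK i then - U i th else - K)"
    by (simp add: tl_star_def U_def)
  show "tlS i th = ast i th * Xm i th - U i th"
    using a tl gt_thK[OF i th] by auto
  show "0 \<le> ast i th" using a gt_thK[OF i th] by auto
  have "(U i th - K) / Xm i th \<le> hi - lo" if "th > thK i"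
  proof -
    have xp: "Xm i th > 0" using gt_thK[OF i th that] by simp
    have "U i th - K \<le> (th - lo) * Xm i th" using U_le[OF i th] K by simp
    also have "\<dots> \<le> (hi - lo) * Xm i th" using th xp by (intro mult_right_mono) auto
    finally show ?thesis using xp by (simp add: divide_le_eq)
  qed
  thus "ast i th \<le> hi - lo" using a lohi by auto
  show "- tlS i th \<le> K" using tl le_thK[OF i th] by auto
  show "\<bar>tlS i th\<bar> \<le> K + (hi - lo)" using tl U_nonneg[OF i th] U_bound[OF i th] K lohi by auto
qed

lemma WL_int:
  assumes Q: "Q \<in> QS" and i: "i \<in> {1,2}" and r: "r \<in> {lo..hi}"
    and s: "\<And>z. z \<in> {lo..hi} \<Longrightarrow> s z = w * x i r z + l * (1 - x i r z)"
  shows "(\<integral>z. c * x i r z - s z \<partial>Q) = - l + (c - w + l) * (\<integral>z. x i r z \<partial>Q)"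
proof -
  interpret prob_space Q using QS_D[OF Q] by simp
  have sp: "space Q = {lo..hi}" using QS_D[OF Q] by simp
  have "(\<integral>z. c * x i r z - s z \<partial>Q) = (\<integral>z. - l + (c - w + l) * x i r z \<partial>Q)"
    using s sp by (intro Bochner_Integration.integral_cong) (auto simp: algebra_simps)
  also have "\<dots> = - l + (c - w + l) * (\<integral>z. x i r z \<partial>Q)"
    using integrable_x[OF Q i r] prob_space by simp
  finally show ?thesis .
qed

lemma WL_img:
  assumes i: "i \<in> {1,2}" and r: "r \<in> {lo..hi}"
    and s: "\<And>z. z \<in> {lo..hi} \<Longrightarrow> s z = w * x i r z + l * (1 - x i r z)"
  shows "(\<lambda>Q. \<integral>z. c * x i r z - s z \<partial>Q) ` QS = (\<lambda>Q. - l + (c - w + l) * (\<integral>z. x i r z \<partial>Q)) ` QS"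
  using WL_int[OF _ i r s] by (intro image_cong) auto

lemma WL_Inf_pos:
  assumes i: "i \<in> {1,2}" and r: "r \<in> {lo..hi}"
    and s: "\<And>z. z \<in> {lo..hi} \<Longrightarrow> s z = w * x i r z + l * (1 - x i r z)"
    and a: "c - w + l \<ge> 0"
  shows "Inf ((\<lambda>Q. \<integral>z. c * x i r z - s z \<partial>Q) ` QS) = - l + (c - w + l) * Xm i r"
proof -
  have "Inf ((\<lambda>Q. \<integral>z. c * x i r z - s z \<partial>Q) ` QS) = Inf ((\<lambda>Q. - l + (c - w + l) * (\<integral>z. x i r z \<partial>Q)) ` QS)"
    using WL_img[OF i r s, of c] by simp
  also have "\<dots> = - l + (c - w + l) * Inf ((\<lambda>Q. (\<integral>z. x i r z \<partial>Q)) ` QS)"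
    by (rule Inf_affine[OF QS_ne _ a, where m=0]) (use int_x_bounds i r in auto)
  finally show ?thesis by (simp add: Xmin_def)
qed

lemma WL_Inf_le:
  assumes i: "i \<in> {1,2}" and r: "r \<in> {lo..hi}"
    and s: "\<And>z. z \<in> {lo..hi} \<Longrightarrow> s z = w * x i r z + l * (1 - x i r z)"
  shows "Inf ((\<lambda>Q. \<integral>z. c * x i r z - s z \<partial>Q) ` QS) \<le> - l + (c - w + l) * Xm i r"
proof (cases "c - w + l \<ge> 0")
  case True thus ?thesis using WL_Inf_pos[OF i r s] by simp
next
  case False
  have "Inf ((\<lambda>Q. - l + (c - w + l) * (\<integral>z. x i r z \<partial>Q)) ` QS) \<le> - l + (c - w + l) * (\<integral>z. x i r z \<partial>P)"
  proof (rule cInf_lower)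
    show "- l + (c - w + l) * (\<integral>z. x i r z \<partial>P) \<in> (\<lambda>Q. - l + (c - w + l) * (\<integral>z. x i r z \<partial>Q)) ` QS"
      using P_QS by auto
    show "bdd_below ((\<lambda>Q. - l + (c - w + l) * (\<integral>z. x i r z \<partial>Q)) ` QS)"
    proof (rule bdd_belowI2[where m="- l + (c - w + l)"])
      fix Q assume "Q \<in> QS"
      hence "(\<integral>z. x i r z \<partial>Q) \<le> 1" using int_x_bounds i r by auto
      thus "- l + (c - w + l) \<le> - l + (c - w + l) * (\<integral>z. x i r z \<partial>Q)" using False
        by (smt (verit, best) mult_le_cancel_left1)
    qed
  qed
  also have "\<dots> \<le> - l + (c - w + l) * Xm i r"
    using Xm_bounds(2)[OF i r] False by (simp add: Xint_def mult_left_mono_neg)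
  finally show ?thesis using WL_img[OF i r s, of c] by simp
qed

end

context ctx begin

lemma U_meas: "i \<in> {1,2} \<Longrightarrow> U i \<in> borel_measurable B"
  unfolding BTheta_def by (rule borel_measurable_continuous_on_restrict[OF U_cont])

lemma Xm_meas: "i \<in> {1,2} \<Longrightarrow> Xm i \<in> borel_measurable B"
  unfolding BTheta_def by (rule borel_measurable_mono_on_fnc[OF Xm_mono])

lemma id_meas: "(\<lambda>z::real. z) \<in> borel_measurable B"
  unfolding BTheta_def by (rule measurable_restrict_space1) simp

lemma twS_meas: "i \<in> {1,2} \<Longrightarrow> twS i \<in> borel_measurable B"
proof -
  assume i: "i \<in> {1,2}"
  have c: "{th \<in> space B. th \<le> thK i} \<in> sets B"
    by (rule borel_measurable_le[OF id_meas borel_measurable_const])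
  have "(\<lambda>th. th - U i th) \<in> borel_measurable B" by (intro borel_measurable_diff id_meas U_meas[OF i])
  moreover have "(\<lambda>th. th - K - (1 / Xm i th) * (U i th - K)) \<in> borel_measurable B"
    by (intro borel_measurable_diff borel_measurable_times borel_measurable_divide id_meas U_meas[OF i]
        Xm_meas[OF i] borel_measurable_const)
  ultimately have "(\<lambda>th. if th \<le> thK i then th - U i th else th - K - (1 / Xm i th) * (U i th - K)) \<in> borel_measurable B"
    using c by (rule measurable_If)
  moreover have "twS i = (\<lambda>th. if th \<le> thK i then th - U i th else th - K - (1 / Xm i th) * (U i th - K))"
    by (auto simp: tw_star_def U_def)
  ultimately show ?thesis by simp
qed

lemma tlS_meas: "i \<in> {1,2} \<Longrightarrow> tlS i \<in> borel_measurable B"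
proof -
  assume i: "i \<in> {1,2}"
  have c: "{th \<in> space B. th \<le> thK i} \<in> sets B"
    by (rule borel_measurable_le[OF id_meas borel_measurable_const])
  have "(\<lambda>th. - U i th) \<in> borel_measurable B" by (intro borel_measurable_uminus U_meas[OF i])
  hence "(\<lambda>th. if th \<le> thK i then - U i th else - K) \<in> borel_measurable B"
    using borel_measurable_const c by (rule measurable_If)
  moreover have "tlS i = (\<lambda>th. if th \<le> thK i then - U i th else - K)"
    by (auto simp: tl_star_def U_def)
  ultimately show ?thesis by simp
qed

lemma ts_eq: "ts i a b = twS i a * x i a b + tlS i a * (1 - x i a b)"
  by (simp add: t_star_def)

lemma abs_comb:
  fixes w l t :: real
  assumes "0 \<le> t" "t \<le> 1"
  shows "\<bar>w * t + l * (1 - t)\<bar> \<le> \<bar>w\<bar> + \<bar>l\<bar>"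
proof -
  have "\<bar>w * t\<bar> = \<bar>w\<bar> * t" using assms by (simp add: abs_mult)
  also have "\<dots> \<le> \<bar>w\<bar>" using assms by (simp add: mult_left_le)
  finally have 1: "\<bar>w * t\<bar> \<le> \<bar>w\<bar>" .
  have "\<bar>l * (1 - t)\<bar> = \<bar>l\<bar> * (1 - t)" using assms by (simp add: abs_mult)
  also have "\<dots> \<le> \<bar>l\<bar>" using assms by (simp add: mult_left_le)
  finally have 2: "\<bar>l * (1 - t)\<bar> \<le> \<bar>l\<bar>" .
  have "\<bar>w * t + l * (1 - t)\<bar> \<le> \<bar>w * t\<bar> + \<bar>l * (1 - t)\<bar>" by (rule abs_triangle_ineq)
  also have "\<dots> \<le> \<bar>w\<bar> + \<bar>l\<bar>" using 1 2 by (rule add_mono)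
  finally show ?thesis .
qed

lemma ts_transfer: "transfer_rule lo hi ts"
  unfolding transfer_rule_def bdd_meas2_def
proof (intro ballI conjI)
  fix i :: nat assume i: "i \<in> {1,2}"
  have xm: "(\<lambda>(a,b). x i a b) \<in> borel_measurable (B \<Otimes>\<^sub>M B)"
    using AR i unfolding allocation_rule_def bdd_meas2_def by blast
  have "(\<lambda>z. twS i (fst z) * (\<lambda>(a,b). x i a b) z + tlS i (fst z) * (1 - (\<lambda>(a,b). x i a b) z)) \<in> borel_measurable (B \<Otimes>\<^sub>M B)"
  proof -
    have f1: "(\<lambda>z. twS i (fst z)) \<in> borel_measurable (B \<Otimes>\<^sub>M B)"
      by (rule measurable_compose[OF measurable_fst twS_meas[OF i]])
    have f2: "(\<lambda>z. tlS i (fst z)) \<in> borel_measurable (B \<Otimes>\<^sub>M B)"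
      by (rule measurable_compose[OF measurable_fst tlS_meas[OF i]])
    show ?thesis
      by (intro borel_measurable_add borel_measurable_times borel_measurable_diff f1 f2 xm borel_measurable_const)
  qed
  moreover have "(\<lambda>(a,b). ts i a b) = (\<lambda>z. twS i (fst z) * (\<lambda>(a,b). x i a b) z + tlS i (fst z) * (1 - (\<lambda>(a,b). x i a b) z))"
    by (auto simp: ts_eq)
  ultimately show "(\<lambda>(a,b). ts i a b) \<in> borel_measurable (B \<Otimes>\<^sub>M B)" by simp
  show "\<exists>C. \<forall>a\<in>{lo..hi}. \<forall>b\<in>{lo..hi}. \<bar>ts i a b\<bar> \<le> C"
  proof (intro exI[of _ "hi + 3 * (hi - lo) + 2 * K"] ballI)
    fix a b assume a: "a \<in> {lo..hi}" and b: "b \<in> {lo..hi}"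
    have tw: "twS i a = a - ast i a + tlS i a" by (simp add: ast_def)
    have A: "0 \<le> ast i a" "ast i a \<le> hi - lo" "\<bar>tlS i a\<bar> \<le> K + (hi - lo)"
      using ast_tl(4,5,7)[OF i a] by auto
    have b1: "\<bar>twS i a\<bar> \<le> hi + (hi - lo) + (K + (hi - lo))"
      unfolding tw using A a lo_pos by (simp add: abs_le_iff)
    have x01: "0 \<le> x i a b" "x i a b \<le> 1" using x_bounds[OF i a b] by auto
    have "\<bar>ts i a b\<bar> \<le> \<bar>twS i a\<bar> + \<bar>tlS i a\<bar>"
      unfolding ts_eq using x01 by (rule abs_comb)
    moreover have "\<And>p q r. p \<le> q + r \<Longrightarrow> q \<le> hi + (hi - lo) + (K + (hi - lo)) \<Longrightarrow> r \<le> K + (hi - lo) \<Longrightarrow> p \<le> hi + 3 * (hi - lo) + 2 * K"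
      by (simp add: algebra_simps)
    ultimately show "\<bar>ts i a b\<bar> \<le> hi + 3 * (hi - lo) + 2 * K" using b1 A(3) by blast
  qed
qed

lemma ts_wl: "win_lose_dependent lo hi x ts"
  unfolding win_lose_dependent_def
  apply (rule exI[of _ "tw_star lo hi P D eta x K"], rule exI[of _ "tl_star lo hi P D eta x K"])
  apply (intro ballI conjI)
   apply (simp add: ts_eq)
  subgoal for i th th' using ast_tl(4)[of i th] by (simp add: ast_def)
  done

lemma ts_Umin: "i \<in> {1,2} \<Longrightarrow> th \<in> {lo..hi} \<Longrightarrow> Umin lo hi P D eta x ts i th = U i th"
proof -
  assume i: "i \<in> {1,2}" and th: "th \<in> {lo..hi}"
  have "Umin lo hi P D eta x ts i th = - tlS i th + (th - twS i th + tlS i th) * Xm i th"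
  proof -
    have eq: "\<And>z. z \<in> {lo..hi} \<Longrightarrow> ts i th z = twS i th * x i th z + tlS i th * (1 - x i th z)"
      by (simp add: ts_eq)
    have a: "th - twS i th + tlS i th \<ge> 0" using ast_tl(4)[OF i th] by (simp add: ast_def)
    show ?thesis unfolding Umin_def by (rule WL_Inf_pos[OF i th eq a])
  qed
  moreover have e1: "th - twS i th + tlS i th = ast i th" by (simp add: ast_def)
  moreover have e2: "tlS i th = ast i th * Xm i th - U i th" by (rule ast_tl(2)[OF i th])
  ultimately show ?thesis by simp
qed

lemma ts_Klim: "K_limited lo hi x K ts"
  unfolding K_limited_def
proof (intro ballI impI allI)
  fix i th thw thl assume i: "i \<in> {1,2::nat}" and th: "th \<in> {lo..hi}"
    and "x i th thw = 1 \<and> x i th thl = 0"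
  hence "ts i th thl = tlS i th" by (simp add: ts_eq)
  thus "- ts i th thl \<le> K" using ast_tl(6)[OF i th] by simp
qed

lemma ts_IR: "individually_rational lo hi P D eta x ts"
  unfolding individually_rational_def using ts_Umin U_nonneg by simp

lemma ts_Vrep:
  assumes i: "i \<in> {1,2}" and th: "th \<in> {lo..hi}" and r: "r \<in> {lo..hi}"
  shows "Vrep lo hi P D eta x ts i th r \<le> U i th"
proof -
  have "Vrep lo hi P D eta x ts i th r \<le> - tlS i r + (th - twS i r + tlS i r) * Xm i r"
    unfolding Vrep_def by (rule WL_Inf_le[OF i r]) (simp add: ts_eq)
  also have "\<dots> = U i r + (th - r) * Xm i r"
  proof -
    have e1: "th - twS i r + tlS i r = ast i r + (th - r)" by (simp add: ast_def)
    have e2: "tlS i r = ast i r * Xm i r - U i r" by (rule ast_tl(2)[OF i r])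
    show ?thesis unfolding e1 using e2 by (simp add: algebra_simps)
  qed
  also have "\<dots> \<le> U i th"
  proof (cases "r \<le> th")
    case True
    have "lo \<le> r" "th \<le> hi" using r th by auto
    hence "(th - r) * Xm i r \<le> U i th - U i r" using U_diff(2)[OF i _ True] by blast
    thus ?thesis by (simp add: algebra_simps)
  next
    case False
    have "lo \<le> th" "th \<le> r" "r \<le> hi" using r th False by auto
    hence "U i r - U i th \<le> (r - th) * Xm i r" using U_diff(3)[OF i] by blast
    thus ?thesis by (simp add: algebra_simps)
  qed
  finally show ?thesis .
qed

lemma ts_IC: "incentive_compatible lo hi P D eta x ts"
  unfolding incentive_compatible_def
proof (intro ballI)
  fix i th r assume i: "i \<in> {1,2::nat}" and th: "th \<in> {lo..hi}" and r: "r \<in> {lo..hi}"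
  have "Vrep lo hi P D eta x ts i th th = Umin lo hi P D eta x ts i th"
    by (simp add: Vrep_def Umin_def)
  thus "Vrep lo hi P D eta x ts i th r \<le> Vrep lo hi P D eta x ts i th th"
    using ts_Vrep[OF i th r] ts_Umin[OF i th] by simp
qed

end

context ctx begin

lemma single_sets: "th \<in> {lo..hi} \<Longrightarrow> {th} \<in> sets B"
  unfolding BTheta_def by (subst sets_restrict_space_iff) auto

lemma P_single_null: "th \<in> {lo..hi} \<Longrightarrow> {th} \<in> null_sets P"
  using atoml single_sets sets_P by (auto simp: null_sets_def)

lemma Q_single_null: "Q \<in> QS \<Longrightarrow> th \<in> {lo..hi} \<Longrightarrow> {th} \<in> null_sets Q"
  using QS_D(5)[of Q] P_single_null unfolding absolutely_continuous_def by blast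

lemma AE_neq: "Q \<in> QS \<Longrightarrow> th \<in> {lo..hi} \<Longrightarrow> AE z in Q. z \<noteq> th"
  by (rule AE_I'[OF Q_single_null]) auto

definition "Wset i th = {z \<in> {lo..hi}. x i th z = 1}"

lemma Wset_sets: "i \<in> {1,2} \<Longrightarrow> th \<in> {lo..hi} \<Longrightarrow> Wset i th \<in> sets B"
  using borel_measurable_eq[OF x_meas borel_measurable_const, of i th 1] by (simp add: Wset_def)

lemma x_ind:
  assumes i: "i \<in> {1,2}" and th: "th \<in> {lo..hi}" and z: "z \<in> {lo..hi}" "z \<noteq> th"
  shows "x i th z = indicator (Wset i th) z"
  using AXi(1)[OF i th z(1) z(2)] z by (auto simp: Wset_def)

lemma int_x_W:
  assumes Q: "Q \<in> QS" and i: "i \<in> {1,2}" and th: "th \<in> {lo..hi}"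
  shows "(\<integral>z. x i th z \<partial>Q) = measure Q (Wset i th)"
proof -
  have sp: "space Q = {lo..hi}" using QS_D[OF Q] by simp
  have "(\<integral>z. x i th z \<partial>Q) = (\<integral>z. indicator (Wset i th) z \<partial>Q)"
  proof (rule integral_cong_AE)
    show "x i th \<in> borel_measurable Q" by (rule meas_B_to[OF x_meas[OF i th] QS_D(3)[OF Q]])
    show "(\<lambda>z. indicator (Wset i th) z :: real) \<in> borel_measurable Q"
      using Wset_sets[OF i th] QS_D(3)[OF Q] by (intro borel_measurable_indicator) simp
    show "AE z in Q. x i th z = indicator (Wset i th) z"
      using AE_neq[OF Q th] AE_space[of Q]
    proof eventually_elim
      case (elim z)
      have "z \<in> {lo..hi}" using elim sp by simp
      thus ?case by (rule x_ind[OF i th]) (use elim in simp)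
    qed
  qed
  also have "\<dots> = measure Q (Wset i th)"
  proof -
    have e: "Wset i th \<inter> space Q = Wset i th" unfolding sp Wset_def by blast
    have "(\<integral>z. indicator (Wset i th) z \<partial>Q) = measure Q (Wset i th \<inter> space Q)" by (rule Bochner_Integration.integral_indicator)
    thus ?thesis unfolding e .
  qed
  finally show ?thesis .
qed

lemma XX_W: "i \<in> {1,2} \<Longrightarrow> th \<in> {lo..hi} \<Longrightarrow> XX i th = measure P (Wset i th)"
  using int_x_W[OF P_QS] by (simp add: Xint_def)

lemma emeasure_density_real:
  fixes f :: "real \<Rightarrow> real"
  assumes f: "f \<in> borel_measurable B" and nn: "\<And>z. z \<in> {lo..hi} \<Longrightarrow> 0 \<le> f z \<and> f z \<le> C"
    and A: "A \<in> sets B"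
  shows "emeasure (density P f) A = ennreal (\<integral>z. f z * indicator A z \<partial>P)"
proof -
  have fP: "f \<in> borel_measurable P" using meas_B_to[OF f sets_P] .
  have AP: "A \<in> sets P" using A sets_P by simp
  have "emeasure (density P f) A = (\<integral>\<^sup>+ z. ennreal (f z) * indicator A z \<partial>P)"
    by (rule emeasure_density[OF measurable_compose[OF fP measurable_ennreal] AP])
  also have "\<dots> = (\<integral>\<^sup>+ z. ennreal (f z * indicator A z) \<partial>P)"
    by (intro nn_integral_cong) (auto simp: indicator_def)
  also have "\<dots> = ennreal (\<integral>z. f z * indicator A z \<partial>P)"
  proof (rule nn_integral_eq_integral)
    have "integrable P (\<lambda>z. f z * indicator A z)"
    proof (rule integrable_QS[OF P_QS, where C=C])
      show "(\<lambda>z. f z * indicator A z) \<in> borel_measurable B"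
        using f A by (intro borel_measurable_times borel_measurable_indicator) auto
      fix z assume "z \<in> {lo..hi}" thus "\<bar>f z * indicator A z\<bar> \<le> C" using nn[of z] by (auto simp: indicator_def)
    qed
    thus "integrable P (\<lambda>z. f z * indicator A z)" .
    show "AE z in P. 0 \<le> f z * indicator A z" using nn by (intro AE_I2) auto
  qed
  finally show ?thesis .
qed


lemma finE:
  assumes "W \<subseteq> {lo..hi}"
  shows "sigma_algebra {lo..hi} {{}, W, {lo..hi} - W, {lo..hi}}"
proof -
  have "algebra {lo..hi} {{}, W, {lo..hi} - W, {lo..hi}}"
    unfolding algebra_iff_Un using assms by auto
  thus ?thesis by (rule algebra.is_sigma_algebra) simp
qed

lemma AD45:
  assumes DQ: "Delta lo hi (sets B) Q" and E: "is_salg lo hi E" "E \<subseteq> sets B"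
  shows "D (restr Q E) (restr P E) \<le> D Q P"
    "absolutely_continuous P Q \<Longrightarrow> (AE z in P. RN_deriv (restr P E) (restr Q E) z = RN_deriv P Q z)
       \<Longrightarrow> D (restr Q E) (restr P E) = D Q P"
  using AD salgB DB DQ E unfolding assumption_D_def by blast+

lemma RN_coarse:
  fixes c1 c2 :: real
  assumes W: "W \<in> sets B" and c: "0 \<le> c1" "0 \<le> c2"
  defines "E \<equiv> {{}, W, {lo..hi} - W, {lo..hi}}"
  defines "h \<equiv> \<lambda>z. ennreal (c1 * indicator W z + c2 * indicator ({lo..hi} - W) z)"
  shows "AE z in P. RN_deriv (restr P E) (restr (density P h) E) z = RN_deriv P (density P h) z"
proof -
  let ?Q = "density P h"
  have Wsub: "W \<subseteq> {lo..hi}" using sets.sets_into_space[OF W] by simp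
  have Lset: "{lo..hi} - W \<in> sets B" using W sets.compl_sets[OF W] by simp
  have sa: "sigma_algebra {lo..hi} E" unfolding E_def by (rule finE[OF Wsub])
  have EP: "E \<subseteq> Pow {lo..hi}" unfolding E_def using Wsub by auto
  define F where "F = measure_of {lo..hi} E (\<lambda>_. 0)"
  have sF: "sets F = E" unfolding F_def using EP sigma_algebra.sigma_sets_eq[OF sa] by simp
  have spF: "space F = {lo..hi}" unfolding F_def using EP by simp
  have EB: "E \<subseteq> sets B" unfolding E_def using W Lset sets.empty_sets[of B] sets.top[of B] by auto
  have sub: "subalgebra P F" unfolding subalgebra_def using sF spF EB sets_P by simp
  have subQ: "subalgebra ?Q F" unfolding subalgebra_def using sF spF EB sets_P by simp
  have rP: "restr P E = restr_to_subalg P F" unfolding restr_def restr_to_subalg_def sF by simp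
  have rQ: "restr ?Q E = restr_to_subalg ?Q F" unfolding restr_def restr_to_subalg_def sF by simp
  have sets_rP: "sets (restr_to_subalg P F) = E" using sets_restr_to_subalg[OF sub] sF by simp
  have hm: "\<And>M. W \<in> sets M \<Longrightarrow> {lo..hi} - W \<in> sets M \<Longrightarrow> h \<in> borel_measurable M"
    unfolding h_def
    by (intro measurable_compose[OF _ measurable_ennreal] borel_measurable_add borel_measurable_times
        borel_measurable_const borel_measurable_indicator) auto
  have hP: "h \<in> borel_measurable P" using hm W Lset sets_P by simp
  have hF: "h \<in> borel_measurable (restr_to_subalg P F)" using hm sets_rP unfolding E_def by simp
  have dens: "density (restr_to_subalg P F) h = restr_to_subalg ?Q F"
  proof (rule measure_eqI)
    show "sets (density (restr_to_subalg P F) h) = sets (restr_to_subalg ?Q F)"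
      using sets_restr_to_subalg[OF sub] sets_restr_to_subalg[OF subQ] by simp
    fix A assume "A \<in> sets (density (restr_to_subalg P F) h)"
    hence A: "A \<in> sets F" using sets_restr_to_subalg[OF sub] by simp
    hence AP: "A \<in> sets P" using sub unfolding subalgebra_def by auto
    have "emeasure (density (restr_to_subalg P F) h) A = (\<integral>\<^sup>+ z. h z * indicator A z \<partial>restr_to_subalg P F)"
      by (rule emeasure_density[OF hF]) (simp add: sets_restr_to_subalg[OF sub] A)
    also have "\<dots> = (\<integral>\<^sup>+ z. h z * indicator A z \<partial>P)"
    proof (rule nn_integral_subalgebra)
      show "(\<lambda>z. h z * indicator A z) \<in> borel_measurable (restr_to_subalg P F)"
        using hF A sets_restr_to_subalg[OF sub] by (intro borel_measurable_times_ennreal borel_measurable_indicator) auto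
      show "sets (restr_to_subalg P F) \<subseteq> sets P" using sets_restr_to_subalg[OF sub] sub
        unfolding subalgebra_def by simp
      show "space (restr_to_subalg P F) = space P" by (rule space_restr_to_subalg)
      fix A' assume "A' \<in> sets (restr_to_subalg P F)"
      thus "emeasure (restr_to_subalg P F) A' = emeasure P A'"
        using emeasure_restr_to_subalg[OF sub] sets_restr_to_subalg[OF sub] by simp
    qed
    also have "\<dots> = emeasure ?Q A" by (rule emeasure_density[OF hP AP, symmetric])
    also have "\<dots> = emeasure (restr_to_subalg ?Q F) A" using emeasure_restr_to_subalg[OF subQ A] by simp
    finally show "emeasure (density (restr_to_subalg P F) h) A = emeasure (restr_to_subalg ?Q F) A" .
  qed
  have sfF: "sigma_finite_measure (restr_to_subalg P F)"
    by (rule prob_space_imp_sigma_finite[OF prob_space_restr_to_subalg[OF sub P_prob]])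
  have "AE z in restr_to_subalg P F. h z = RN_deriv (restr_to_subalg P F) (restr_to_subalg ?Q F) z"
    by (rule sigma_finite_measure.RN_deriv_unique[OF sfF hF dens])
  hence A1: "AE z in P. h z = RN_deriv (restr P E) (restr ?Q E) z"
    unfolding rP rQ by (rule AE_restr_to_subalg[OF sub])
  have sfP: "sigma_finite_measure P" by (rule prob_space_imp_sigma_finite[OF P_prob])
  have A2: "AE z in P. h z = RN_deriv P ?Q z"
    by (rule sigma_finite_measure.RN_deriv_unique[OF sfP hP refl])
  from A1 A2 show ?thesis by eventually_elim simp
qed


lemma coarsen:
  assumes W: "W \<in> sets B" and p01: "0 < measure P W" "measure P W < 1" and Q: "Q \<in> QS"
  defines "h \<equiv> \<lambda>z. measure Q W / measure P W * indicator W z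
                  + (1 - measure Q W) / (1 - measure P W) * indicator ({lo..hi} - W) z"
  shows "density P (\<lambda>z. ennreal (h z)) \<in> QS"
    "\<And>f. f \<in> borel_measurable B \<Longrightarrow> (\<integral>z. f z \<partial>density P (\<lambda>z. ennreal (h z))) = (\<integral>z. h z * f z \<partial>P)"
proof -
  define qW where "qW = measure Q W"
  define pW where "pW = measure P W"
  define c1 where "c1 = qW / pW"
  define c2 where "c2 = (1 - qW) / (1 - pW)"
  let ?L = "{lo..hi} - W"
  let ?Q = "density P (\<lambda>z. ennreal (h z))"
  interpret Qp: prob_space Q using QS_D[OF Q] by simp
  interpret Pp: prob_space P using P_prob .
  have Wsub: "W \<subseteq> {lo..hi}" using sets.sets_into_space[OF W] by simp
  have Lset: "?L \<in> sets B" using W sets.compl_sets[OF W] by simp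
  have q01: "0 \<le> qW" "qW \<le> 1" unfolding qW_def by auto
  have pp: "0 < pW" "pW < 1" using p01 by (auto simp: pW_def)
  have c: "0 \<le> c1" "0 \<le> c2" using q01 pp by (auto simp: c1_def c2_def)
  have h_eq: "h = (\<lambda>z. c1 * indicator W z + c2 * indicator ?L z)"
    by (simp add: h_def c1_def c2_def qW_def pW_def)
  have hm: "h \<in> borel_measurable B" unfolding h_eq
    using W Lset by (intro borel_measurable_add borel_measurable_times borel_measurable_const borel_measurable_indicator) auto
  have hb: "\<And>z. z \<in> {lo..hi} \<Longrightarrow> 0 \<le> h z \<and> h z \<le> c1 + c2"
    unfolding h_eq using c by (auto simp: indicator_def)
  have sQ: "sets Q = sets B" "space Q = {lo..hi}" using QS_D[OF Q] by auto
  have eW: "emeasure ?Q W = ennreal qW"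
  proof -
    have "emeasure ?Q W = ennreal (\<integral>z. h z * indicator W z \<partial>P)"
      by (rule emeasure_density_real[OF hm hb W])
    also have "(\<integral>z. h z * indicator W z \<partial>P) = (\<integral>z. c1 * indicator W z \<partial>P)"
      unfolding h_eq by (intro Bochner_Integration.integral_cong) (auto simp: indicator_def)
    also have "\<dots> = c1 * pW" using W sets_P Wsub by (simp add: pW_def Int_absorb2)
    also have "\<dots> = qW" using pp by (simp add: c1_def)
    finally show ?thesis .
  qed
  have measL: "measure P ?L = 1 - pW"
    using Pp.prob_compl[of W] W sets_P by (simp add: pW_def)
  have measQL: "measure Q ?L = 1 - qW"
    using Qp.prob_compl[of W] W sQ by (simp add: qW_def)
  have eL: "emeasure ?Q ?L = ennreal (1 - qW)"
  proof -
    have "emeasure ?Q ?L = ennreal (\<integral>z. h z * indicator ?L z \<partial>P)"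
      by (rule emeasure_density_real[OF hm hb Lset])
    also have "(\<integral>z. h z * indicator ?L z \<partial>P) = (\<integral>z. c2 * indicator ?L z \<partial>P)"
      unfolding h_eq by (intro Bochner_Integration.integral_cong) (auto simp: indicator_def)
    also have "\<dots> = c2 * (1 - pW)"
    proof -
      have "({lo..hi} - W) \<inter> {lo..hi} = {lo..hi} - W" by auto
      thus ?thesis using measL by simp
    qed
    also have "\<dots> = 1 - qW" using pp by (simp add: c2_def)
    finally show ?thesis .
  qed
  have eO: "emeasure ?Q {lo..hi} = 1"
  proof -
    have "{lo..hi} = W \<union> ?L" using Wsub by auto
    hence "emeasure ?Q {lo..hi} = emeasure ?Q W + emeasure ?Q ?L"
      using W Lset sets_P by (simp add: plus_emeasure)
    also have "\<dots> = ennreal qW + ennreal (1 - qW)" using eW eL by simp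
    also have "\<dots> = 1" using q01 by (simp add: ennreal_plus[symmetric] del: ennreal_plus)
    finally show ?thesis .
  qed
  have DQ': "Delta lo hi (sets B) ?Q"
    unfolding Delta_def using eO sets_P by (auto intro!: prob_spaceI)
  have QeW: "emeasure Q W = ennreal qW" unfolding qW_def by (rule Qp.emeasure_eq_measure)
  have QeL: "emeasure Q ?L = ennreal (1 - qW)" using measQL Qp.emeasure_eq_measure by simp
  have QeO: "emeasure Q {lo..hi} = 1" using Qp.emeasure_space_1 sQ by simp
  define E where "E = {{}, W, ?L, {lo..hi}}"
  have sa: "sigma_algebra {lo..hi} E" unfolding E_def by (rule finE[OF Wsub])
  have EB: "E \<subseteq> sets B" unfolding E_def using W Lset sets.empty_sets[of B] sets.top[of B] by auto
  have salgE: "is_salg lo hi E" unfolding is_salg_def using sa EB by simp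
  have EP: "E \<subseteq> Pow {lo..hi}" unfolding E_def using Wsub by auto
  have rr: "restr ?Q E = restr Q E"
    unfolding restr_def using sQ
  proof -
    have "measure_of {lo..hi} E (emeasure ?Q) = measure_of {lo..hi} E (emeasure Q)"
    proof (rule measure_of_eq[OF EP])
      fix a assume "a \<in> sigma_sets {lo..hi} E"
      hence "a \<in> E" using sigma_algebra.sigma_sets_eq[OF sa] by simp
      thus "emeasure ?Q a = emeasure Q a" unfolding E_def using eW eL eO QeW QeL QeO by auto
    qed
    thus "measure_of (space ?Q) E (emeasure ?Q) = measure_of (space Q) E (emeasure Q)"
      using sQ by simp
  qed
  have ac: "absolutely_continuous P ?Q"
    by (rule absolutely_continuousI_density) (use hm sets_P meas_B_to in \<open>blast intro: measurable_compose[OF _ measurable_ennreal]\<close>)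
  have RN: "AE z in P. RN_deriv (restr P E) (restr ?Q E) z = RN_deriv P ?Q z"
    using RN_coarse[OF W c] unfolding E_def h_eq .
  have "D ?Q P = D (restr ?Q E) (restr P E)" using AD45(2)[OF DQ' salgE EB ac RN] by simp
  also have "\<dots> = D (restr Q E) (restr P E)" using rr by simp
  also have "\<dots> \<le> D Q P" by (rule AD45(1)[OF QS_D(6)[OF Q] salgE EB])
  also have "\<dots> \<le> ennreal eta" using QS_D(4)[OF Q] .
  finally show "?Q \<in> QS" using DQ' by (simp add: Qset_def)
  fix f :: "real \<Rightarrow> real" assume "f \<in> borel_measurable B"
  have "(\<integral>z. f z \<partial>?Q) = (\<integral>z. h z *\<^sub>R f z \<partial>P)"
  proof (rule integral_density)
    show "f \<in> borel_measurable P" using meas_B_to[OF \<open>f \<in> borel_measurable B\<close> sets_P] .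
    show "h \<in> borel_measurable P" using meas_B_to[OF hm sets_P] .
    show "AE z in P. 0 \<le> h z" using hb by (intro AE_I2) auto
  qed
  thus "(\<integral>z. f z \<partial>?Q) = (\<integral>z. h z * f z \<partial>P)" by simp
qed

end

context ctx begin

interpretation Pp: prob_space P by (rule P_prob)

lemma DPP: "D P P = 0"
  using AD salgB DB unfolding assumption_D_def by blast

lemma AD2:
  assumes DQ: "Delta lo hi (sets B) Q" and ac: "absolutely_continuous P Q"
    and bd: "AE z in P. RN_deriv P Q z \<le> ennreal c"
  shows "continuous_on {0..1} (\<lambda>e. D (mix e Q P) P)"
  using AD salgB DB DQ ac bd unfolding assumption_D_def by blast

lemma ennreal_lin:
  fixes e a b :: real
  assumes "0 \<le> e" "e \<le> 1" "0 \<le> a" "0 \<le> b"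
  shows "ennreal e * ennreal a + ennreal (1 - e) * ennreal b = ennreal (e * a + (1 - e) * b)"
  using assms by (simp add: ennreal_mult[symmetric] ennreal_plus[symmetric] del: ennreal_plus)

lemma mix_density:
  fixes g :: "real \<Rightarrow> real" and e :: real
  assumes gm: "g \<in> borel_measurable B" and gb: "\<And>z. z \<in> {lo..hi} \<Longrightarrow> 0 \<le> g z \<and> g z \<le> C"
    and e: "0 \<le> e" "e \<le> 1"
  shows "mix e (density P (\<lambda>z. ennreal (g z))) P = density P (\<lambda>z. ennreal (e * g z + (1 - e)))"
proof -
  let ?Q = "density P (\<lambda>z. ennreal (g z))"
  let ?k = "\<lambda>z. e * g z + (1 - e)"
  let ?M = "density P (\<lambda>z. ennreal (?k z))"
  have km: "?k \<in> borel_measurable B" using gm by (intro borel_measurable_add borel_measurable_times borel_measurable_const)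
  have kb: "\<And>z. z \<in> {lo..hi} \<Longrightarrow> 0 \<le> ?k z \<and> ?k z \<le> e * C + (1 - e)"
  proof -
    fix z assume z: "z \<in> {lo..hi}"
    have "e * g z \<le> e * C" using gb[OF z] e by (intro mult_left_mono) auto
    moreover have "0 \<le> e * g z" using gb[OF z] e by simp
    ultimately show "0 \<le> ?k z \<and> ?k z \<le> e * C + (1 - e)" using e by simp
  qed
  have "?M = measure_of (space ?M) (sets ?M) (emeasure ?M)" by (rule measure_of_of_measure[symmetric])
  also have "\<dots> = measure_of (space P) (sets P) (emeasure ?M)" by simp
  also have "\<dots> = measure_of (space P) (sets P) (\<lambda>S. ennreal e * emeasure ?Q S + ennreal (1 - e) * emeasure P S)"
  proof (rule measure_of_eq[OF sets.space_closed])
    fix a assume "a \<in> sigma_sets (space P) (sets P)"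
    hence a: "a \<in> sets B" using sets.sigma_sets_eq[of P] sets_P by simp
    have asub: "a \<subseteq> {lo..hi}" using sets.sets_into_space[OF a] by simp
    have ig: "integrable P (\<lambda>z. g z * indicator a z)"
    proof (rule integrable_QS[OF P_QS, where C=C])
      show "(\<lambda>z. g z * indicator a z) \<in> borel_measurable B"
        using gm a by (intro borel_measurable_times borel_measurable_indicator) auto
      fix z assume "z \<in> {lo..hi}" thus "\<bar>g z * indicator a z\<bar> \<le> C" using gb[of z] by (auto simp: indicator_def)
    qed
    have ii: "integrable P (\<lambda>z. indicator a z :: real)"
    proof (rule integrable_QS[OF P_QS, where C=1])
      show "(\<lambda>z. indicator a z :: real) \<in> borel_measurable B" using a by (intro borel_measurable_indicator)
    qed (auto simp: indicator_def)
    have ia: "(\<integral>z. indicator a z \<partial>P) = measure P a"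
    proof -
      have "a \<inter> space P = a" using asub by auto
      thus ?thesis using Bochner_Integration.integral_indicator[of P a] by simp
    qed
    have "emeasure ?M a = ennreal (\<integral>z. ?k z * indicator a z \<partial>P)"
      by (rule emeasure_density_real[OF km kb a])
    also have "(\<integral>z. ?k z * indicator a z \<partial>P) = (\<integral>z. e * (g z * indicator a z) + (1 - e) * indicator a z \<partial>P)"
      by (intro Bochner_Integration.integral_cong) (auto simp: algebra_simps)
    also have "\<dots> = e * (\<integral>z. g z * indicator a z \<partial>P) + (1 - e) * measure P a"
      using ig ii ia by simp
    also have "ennreal \<dots> = ennreal e * ennreal (\<integral>z. g z * indicator a z \<partial>P) + ennreal (1 - e) * ennreal (measure P a)"
    proof (rule ennreal_lin[symmetric, OF e])
      show "0 \<le> (\<integral>z. g z * indicator a z \<partial>P)" using gb by (intro Bochner_Integration.integral_nonneg) (auto simp: indicator_def)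
    qed simp
    also have "\<dots> = ennreal e * emeasure ?Q a + ennreal (1 - e) * emeasure P a"
      using emeasure_density_real[OF gm gb a] Pp.emeasure_eq_measure[of a] by simp
    finally show "emeasure ?M a = ennreal e * emeasure ?Q a + ennreal (1 - e) * emeasure P a" .
  qed
  also have "\<dots> = mix e ?Q P" by (simp add: mix_def)
  finally show ?thesis by simp
qed


lemma Xm_strict:
  assumes i: "i \<in> {1,2}" and th: "th \<in> {lo..hi}" and X0: "0 < XX i th" and X1: "XX i th < 1"
  shows "Xm i th < XX i th"
proof -
  define W where "W = Wset i th"
  let ?L = "{lo..hi} - W"
  have W: "W \<in> sets B" unfolding W_def by (rule Wset_sets[OF i th])
  have Wsub: "W \<subseteq> {lo..hi}" using sets.sets_into_space[OF W] by simp
  have Lset: "?L \<in> sets B" using W sets.compl_sets[OF W] by simp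
  define pL where "pL = measure P ?L"
  have pL: "pL = 1 - XX i th" unfolding pL_def XX_W[OF i th] W_def[symmetric]
    using Pp.prob_compl[of W] W sets_P by simp
  have pLp: "pL > 0" using pL X1 by simp
  define g where "g = (\<lambda>z. indicator ?L z / pL :: real)"
  have gm: "g \<in> borel_measurable B" unfolding g_def
    using Lset by (intro borel_measurable_divide borel_measurable_indicator borel_measurable_const) auto
  have gb: "\<And>z. z \<in> {lo..hi} \<Longrightarrow> 0 \<le> g z \<and> g z \<le> 1 / pL"
    unfolding g_def using pLp by (auto simp: indicator_def)
  have gP: "g \<in> borel_measurable P" using meas_B_to[OF gm sets_P] .
  have G1: "(\<integral>z. g z \<partial>P) = 1"
  proof -
    have "(\<integral>z. g z \<partial>P) = measure P (?L \<inter> space P) / pL" unfolding g_def by simp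
    also have "?L \<inter> space P = ?L" by auto
    finally show ?thesis using pLp by (simp add: pL_def)
  qed
  have Gind: "\<And>A. {lo..hi} \<subseteq> A \<Longrightarrow> (\<integral>z. g z * indicator A z \<partial>P) = 1"
  proof -
    fix A :: "real set" assume A: "{lo..hi} \<subseteq> A"
    have "(\<integral>z. g z * indicator A z \<partial>P) = (\<integral>z. g z \<partial>P)"
      using A by (intro Bochner_Integration.integral_cong) (auto simp: indicator_def)
    thus "(\<integral>z. g z * indicator A z \<partial>P) = 1" using G1 by simp
  qed
  let ?Qg = "density P (\<lambda>z. ennreal (g z))"
  have eQg: "emeasure ?Qg {lo..hi} = 1"
    using emeasure_density_real[OF gm gb sets.top[of B]] Gind[of "{lo..hi}"] by simp
  have DQg: "Delta lo hi (sets B) ?Qg"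
    unfolding Delta_def using eQg sets_P by (auto intro!: prob_spaceI)
  have gPe: "(\<lambda>z. ennreal (g z)) \<in> borel_measurable P" by (rule measurable_compose[OF gP measurable_ennreal])
  have ac: "absolutely_continuous P ?Qg" by (rule absolutely_continuousI_density[OF gPe])
  have sfP: "sigma_finite_measure P" by (rule prob_space_imp_sigma_finite[OF P_prob])
  have "AE z in P. ennreal (g z) = RN_deriv P ?Qg z"
    by (rule sigma_finite_measure.RN_deriv_unique[OF sfP gPe refl])
  hence bd: "AE z in P. RN_deriv P ?Qg z \<le> ennreal (1 / pL)"
    using AE_space[of P]
  proof eventually_elim
    case (elim z)
    hence "g z \<le> 1 / pL" using gb by simp
    hence "ennreal (g z) \<le> ennreal (1 / pL)" by (rule ennreal_leI)
    thus ?case using elim by simp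
  qed
  have cont: "continuous_on {0..1} (\<lambda>e. D (mix e ?Qg P) P)" by (rule AD2[OF DQg ac bd])
  have m0: "mix 0 ?Qg P = P" using mix_density[OF gm gb, of 0] by (simp add: density_1)
  have "((\<lambda>e. D (mix e ?Qg P) P) \<longlongrightarrow> D (mix 0 ?Qg P) P) (at 0 within {0..1})"
    using cont unfolding continuous_on_def by simp
  hence "((\<lambda>e. D (mix e ?Qg P) P) \<longlongrightarrow> 0) (at 0 within {0..1})" using m0 DPP by simp
  hence "eventually (\<lambda>e. D (mix e ?Qg P) P < ennreal eta) (at 0 within {0..1})"
    using eta by (intro order_tendstoD(2)) auto
  then obtain d where d: "d > 0" "\<And>e. e \<in> {0..1} \<Longrightarrow> e \<noteq> 0 \<Longrightarrow> dist e 0 < d \<Longrightarrow> D (mix e ?Qg P) P < ennreal eta"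
    unfolding eventually_at by blast
  define e where "e = min (d / 2) 1"
  have e: "0 < e" "e \<le> 1" using d by (auto simp: e_def)
  have De: "D (mix e ?Qg P) P < ennreal eta" using d e by (intro d(2)) (auto simp: e_def dist_real_def)
  let ?k = "\<lambda>z. e * g z + (1 - e)"
  let ?M = "density P (\<lambda>z. ennreal (?k z))"
  have mixM: "mix e ?Qg P = ?M" by (rule mix_density[OF gm gb]) (use e in auto)
  have km: "?k \<in> borel_measurable B" using gm by (intro borel_measurable_add borel_measurable_times borel_measurable_const)
  have kb: "\<And>z. z \<in> {lo..hi} \<Longrightarrow> 0 \<le> ?k z \<and> ?k z \<le> e * (1 / pL) + (1 - e)"
  proof -
    fix z assume z: "z \<in> {lo..hi}"
    have "e * g z \<le> e * (1 / pL)" using gb[OF z] e by (intro mult_left_mono) auto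
    moreover have "0 \<le> e * g z" using gb[OF z] e by simp
    ultimately show "0 \<le> ?k z \<and> ?k z \<le> e * (1 / pL) + (1 - e)" using e by simp
  qed
  have ig: "integrable P g" by (rule integrable_QS[OF P_QS gm, where C="1/pL"]) (use gb in auto)
  have eM: "emeasure ?M {lo..hi} = 1"
  proof -
    have "emeasure ?M {lo..hi} = ennreal (\<integral>z. ?k z * indicator {lo..hi} z \<partial>P)"
      by (rule emeasure_density_real[OF km kb sets.top[of B, simplified]])
    also have "(\<integral>z. ?k z * indicator {lo..hi} z \<partial>P) = (\<integral>z. e * g z + (1 - e) \<partial>P)"
      by (intro Bochner_Integration.integral_cong) (auto simp: indicator_def)
    also have "\<dots> = e * 1 + (1 - e)" using ig G1 Pp.prob_space by simp
    finally show ?thesis by simp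
  qed
  have DM: "Delta lo hi (sets B) ?M"
    unfolding Delta_def using eM sets_P by (auto intro!: prob_spaceI)
  have MQ: "?M \<in> QS" using DM De mixM by (simp add: Qset_def)
  have xP: "x i th \<in> borel_measurable P" using meas_B_to[OF x_meas[OF i th] sets_P] .
  have ix: "integrable P (x i th)" by (rule integrable_x[OF P_QS i th])
  have igx: "integrable P (\<lambda>z. g z * x i th z)"
  proof (rule integrable_QS[OF P_QS, where C="1/pL"])
    show "(\<lambda>z. g z * x i th z) \<in> borel_measurable B"
      using gm x_meas[OF i th] by (intro borel_measurable_times)
    fix z assume z: "z \<in> {lo..hi}"
    have "\<bar>g z * x i th z\<bar> = g z * x i th z" using gb[OF z] x_bounds[OF i th z] by simp
    also have "\<dots> \<le> g z * 1" using gb[OF z] x_bounds[OF i th z] by (intro mult_left_mono) auto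
    finally show "\<bar>g z * x i th z\<bar> \<le> 1 / pL" using gb[OF z] by simp
  qed
  have gx0: "(\<integral>z. g z * x i th z \<partial>P) = 0"
  proof (rule integral_eq_zero_AE)
    show "AE z in P. g z * x i th z = 0"
      using AE_neq[OF P_QS th] AE_space[of P]
    proof eventually_elim
      case (elim z)
      have z: "z \<in> {lo..hi}" using elim by simp
      have "x i th z = indicator W z" unfolding W_def by (rule x_ind[OF i th z]) (use elim in simp)
      thus ?case unfolding g_def by (auto simp: indicator_def)
    qed
  qed
  have "(\<integral>z. x i th z \<partial>?M) = (\<integral>z. ?k z *\<^sub>R x i th z \<partial>P)"
  proof (rule integral_density)
    show "x i th \<in> borel_measurable P" by (rule xP)
    show "?k \<in> borel_measurable P" using meas_B_to[OF km sets_P] .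
    show "AE z in P. 0 \<le> ?k z" using kb by (intro AE_I2) auto
  qed
  also have "\<dots> = (\<integral>z. e * (g z * x i th z) + (1 - e) * x i th z \<partial>P)"
    by (intro Bochner_Integration.integral_cong) (auto simp: algebra_simps)
  also have "\<dots> = e * (\<integral>z. g z * x i th z \<partial>P) + (1 - e) * XX i th"
    using igx ix by (simp add: Xint_def)
  also have "\<dots> = (1 - e) * XX i th" using gx0 by simp
  finally have "(\<integral>z. x i th z \<partial>?M) = (1 - e) * XX i th" .
  hence "Xm i th \<le> (1 - e) * XX i th" using Xm_le[OF MQ i th] by simp
  also have "\<dots> < XX i th" using e X0 by (simp add: algebra_simps)
  finally show ?thesis .
qed

end

context ctx begin

interpretation Pp: prob_space P by (rule P_prob)

lemma tr_int:
  assumes s: "transfer_rule lo hi s" and Q: "Q \<in> QS" and i: "i \<in> {1,2}" and r: "r \<in> {lo..hi}"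
  shows "integrable Q (\<lambda>z. c * x i r z - s i r z)"
proof -
  have bm: "bdd_meas2 lo hi s" using s by (simp add: transfer_rule_def)
  obtain C where C: "\<And>a b. a \<in> {lo..hi} \<Longrightarrow> b \<in> {lo..hi} \<Longrightarrow> \<bar>s i a b\<bar> \<le> C"
    using sec_bound[OF bm i] by blast
  have "integrable Q (\<lambda>z. c * x i r z)" using integrable_x[OF Q i r] by simp
  moreover have "integrable Q (s i r)"
    by (rule integrable_QS[OF Q sec_meas[OF bm i r], where C=C]) (use C r in auto)
  ultimately show ?thesis by simp
qed

lemma tr_int_lb:
  assumes s: "transfer_rule lo hi s" and i: "i \<in> {1,2}" and r: "r \<in> {lo..hi}"
  obtains m where "\<And>Q. Q \<in> QS \<Longrightarrow> m \<le> (\<integral>z. c * x i r z - s i r z \<partial>Q)"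
proof -
  have bm: "bdd_meas2 lo hi s" using s by (simp add: transfer_rule_def)
  obtain C where C: "\<And>a b. a \<in> {lo..hi} \<Longrightarrow> b \<in> {lo..hi} \<Longrightarrow> \<bar>s i a b\<bar> \<le> C"
    using sec_bound[OF bm i] by blast
  have "- (\<bar>c\<bar> + C) \<le> (\<integral>z. c * x i r z - s i r z \<partial>Q)" if Q: "Q \<in> QS" for Q
  proof -
    interpret prob_space Q using QS_D[OF Q] by simp
    have sp: "space Q = {lo..hi}" using QS_D[OF Q] by simp
    have "(\<integral>z. - (\<bar>c\<bar> + C) \<partial>Q) \<le> (\<integral>z. c * x i r z - s i r z \<partial>Q)"
    proof (rule integral_mono)
      show "integrable Q (\<lambda>z. c * x i r z - s i r z)" by (rule tr_int[OF s Q i r])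
      fix z assume "z \<in> space Q"
      hence z: "z \<in> {lo..hi}" using sp by simp
      have "\<bar>c * x i r z\<bar> \<le> \<bar>c\<bar>" using x_bounds[OF i r z] by (simp add: abs_mult mult_left_le)
      thus "- (\<bar>c\<bar> + C) \<le> c * x i r z - s i r z" using C[OF r z] by linarith
    qed simp
    thus ?thesis using prob_space by simp
  qed
  thus ?thesis using that by blast
qed

lemma Umin_le:
  assumes s: "transfer_rule lo hi s" and Q: "Q \<in> QS" and i: "i \<in> {1,2}" and r: "r \<in> {lo..hi}"
  shows "Umin lo hi P D eta x s i r \<le> (\<integral>z. r * x i r z - s i r z \<partial>Q)"
proof -
  obtain m where m: "\<And>Q. Q \<in> QS \<Longrightarrow> m \<le> (\<integral>z. r * x i r z - s i r z \<partial>Q)"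
    using tr_int_lb[OF s i r] by blast
  show ?thesis unfolding Umin_def
    by (rule cInf_lower) (use Q m in \<open>auto intro!: bdd_belowI2[where m=m]\<close>)
qed

lemma Vrep_ge:
  assumes s: "transfer_rule lo hi s" and i: "i \<in> {1,2}" and r: "r \<in> {lo..hi}" and th: "th \<in> {lo..hi}"
    and rt: "r \<le> th"
  shows "(th - r) * Xm i r + Umin lo hi P D eta x s i r \<le> Vrep lo hi P D eta x s i th r"
  unfolding Vrep_def
proof (rule cInf_greatest)
  show "(\<lambda>Q. \<integral>z. th * x i r z - s i r z \<partial>Q) ` QS \<noteq> {}" using QS_ne by simp
  fix y assume "y \<in> (\<lambda>Q. \<integral>z. th * x i r z - s i r z \<partial>Q) ` QS"
  then obtain Q where Q: "Q \<in> QS" and y: "y = (\<integral>z. th * x i r z - s i r z \<partial>Q)" by auto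
  have "(\<integral>z. th * x i r z - s i r z \<partial>Q) = (\<integral>z. (th - r) * x i r z + (r * x i r z - s i r z) \<partial>Q)"
    by (intro Bochner_Integration.integral_cong) (auto simp: algebra_simps)
  also have "\<dots> = (th - r) * (\<integral>z. x i r z \<partial>Q) + (\<integral>z. r * x i r z - s i r z \<partial>Q)"
    using integrable_x[OF Q i r] tr_int[OF s Q i r] by simp
  finally have e: "y = (th - r) * (\<integral>z. x i r z \<partial>Q) + (\<integral>z. r * x i r z - s i r z \<partial>Q)" using y by simp
  have "(th - r) * Xm i r \<le> (th - r) * (\<integral>z. x i r z \<partial>Q)"
    using Xm_le[OF Q i r] rt by (intro mult_left_mono) auto
  moreover have "Umin lo hi P D eta x s i r \<le> (\<integral>z. r * x i r z - s i r z \<partial>Q)" by (rule Umin_le[OF s Q i r])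
  ultimately show "(th - r) * Xm i r + Umin lo hi P D eta x s i r \<le> y" unfolding e by simp
qed

lemma envelope:
  assumes s: "transfer_rule lo hi s" and fe: "feasible lo hi P D eta x s" and i: "i \<in> {1,2}"
    and th: "th \<in> {lo..hi}"
  shows "U i th \<le> Umin lo hi P D eta x s i th"
proof -
  let ?f = "Umin lo hi P D eta x s i"
  have IC: "\<And>a b. a \<in> {lo..hi} \<Longrightarrow> b \<in> {lo..hi} \<Longrightarrow> Vrep lo hi P D eta x s i a b \<le> Vrep lo hi P D eta x s i a a"
    using fe i unfolding feasible_def incentive_compatible_def by blast
  have IR: "0 \<le> ?f lo" using fe i lohi unfolding feasible_def individually_rational_def by auto
  have VU: "\<And>a. Vrep lo hi P D eta x s i a a = ?f a" by (simp add: Vrep_def Umin_def)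
  have "integral {lo..th} (Xm i) \<le> ?f th - ?f lo"
  proof (rule envelope_int)
    show "lo \<le> th" using th by simp
    show "mono_on {lo..th} (Xm i)" using Xm_mono[OF i] th by (auto intro: mono_on_subset)
    fix r t assume rt: "lo \<le> r" "r \<le> t" "t \<le> th"
    have rr: "r \<in> {lo..hi}" "t \<in> {lo..hi}" using rt th by auto
    have "(t - r) * Xm i r + ?f r \<le> Vrep lo hi P D eta x s i t r" by (rule Vrep_ge[OF s i rr(1) rr(2) rt(2)])
    also have "\<dots> \<le> ?f t" using IC[OF rr(2) rr(1)] VU[of t] by simp
    finally show "(t - r) * Xm i r \<le> ?f t - ?f r" by simp
  qed
  thus ?thesis using IR by (simp add: U_def)
qed


lemma Tint_WL:
  assumes i: "i \<in> {1,2}" and th: "th \<in> {lo..hi}"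
    and s: "\<And>z. z \<in> {lo..hi} \<Longrightarrow> s i th z = w * x i th z + l * (1 - x i th z)"
  shows "Tint P s i th = w * XX i th + l * (1 - XX i th)"
proof -
  have "Tint P s i th = (\<integral>z. w * x i th z + l * (1 - x i th z) \<partial>P)"
    unfolding Tint_def using s by (intro Bochner_Integration.integral_cong) auto
  also have "\<dots> = w * XX i th + l * (1 - XX i th)"
    using integrable_x[OF P_QS i th] Pp.prob_space by (simp add: Xint_def algebra_simps)
  finally show ?thesis .
qed

lemma Tint_ts:
  assumes i: "i \<in> {1,2}" and th: "th \<in> {lo..hi}"
  shows "Tint P ts i th = th * XX i th - U i th - ast i th * (XX i th - Xm i th)"
proof -
  have "Tint P ts i th = twS i th * XX i th + tlS i th * (1 - XX i th)"
    by (rule Tint_WL[OF i th]) (simp add: ts_eq)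
  moreover have "twS i th = th - ast i th + tlS i th" by (simp add: ast_def)
  moreover have "tlS i th = ast i th * Xm i th - U i th" by (rule ast_tl(2)[OF i th])
  ultimately show ?thesis by (simp add: algebra_simps)
qed

lemma XX_lt1: "i \<in> {1,2} \<Longrightarrow> th \<in> {lo..hi} \<Longrightarrow> th < hi \<Longrightarrow> XX i th < 1"
  using AXi(2)[of i th] Xm_bounds(3)[of i th] by fastforce

lemma exists_win:
  assumes i: "i \<in> {1,2}" and th: "th \<in> {lo..hi}" and X: "0 < XX i th"
  shows "\<exists>z\<in>{lo..hi}. x i th z = 1"
proof (rule ccontr)
  assume "\<not> ?thesis"
  hence "Wset i th = {}" by (auto simp: Wset_def)
  thus False using XX_W[OF i th] X by simp
qed

lemma exists_lose:
  assumes i: "i \<in> {1,2}" and th: "th \<in> {lo..hi}" and X: "XX i th < 1"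
  shows "\<exists>z\<in>{lo..hi}. x i th z = 0"
proof (rule ccontr)
  assume "\<not> ?thesis"
  hence "\<And>z. z \<in> {lo..hi} - {th} \<Longrightarrow> x i th z = 1" using AXi(1)[OF i th] by blast
  hence sub: "{lo..hi} - {th} \<subseteq> Wset i th" by (auto simp: Wset_def)
  have "measure P ({lo..hi} - {th}) = 1 - measure P {th}"
    using Pp.prob_compl[of "{th}"] single_sets[OF th] sets_P by simp
  also have "measure P {th} = 0" using atoml by (simp add: measure_def)
  finally have "measure P ({lo..hi} - {th}) = 1" by simp
  moreover have "measure P ({lo..hi} - {th}) \<le> measure P (Wset i th)"
    by (rule Pp.finite_measure_mono[OF sub]) (use Wset_sets[OF i th] sets_P in simp)
  ultimately show False using XX_W[OF i th] X by simp
qed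

lemma R_row:
  assumes s: "transfer_rule lo hi s" and wl: "win_lose_dependent lo hi x s"
    and Um: "Umin lo hi P D eta x s i th = U i th" and Kl: "K_limited lo hi x K s"
    and i: "i \<in> {1,2}" and th: "th \<in> {lo..hi}" and tlt: "th < hi"
  obtains a where "0 \<le> a" "ast i th \<le> a"
    "Tint P s i th = th * XX i th - U i th - a * (XX i th - Xm i th)"
    "\<And>z. z \<in> {lo..hi} \<Longrightarrow> s i th z = (th - a + (a * Xm i th - U i th)) * x i th z + (a * Xm i th - U i th) * (1 - x i th z)"
proof -
  obtain tw' tl' where T: "\<And>z. z \<in> {lo..hi} \<Longrightarrow> s i th z = tw' i th * x i th z + tl' i th * (1 - x i th z)"
    and T2: "th - tw' i th \<ge> - tl' i th"
    using wl i th unfolding win_lose_dependent_def by blast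
  define w where "w = tw' i th"
  define l where "l = tl' i th"
  define a where "a = th - w + l"
  have a0': "0 \<le> th - w + l" using T2 by (simp add: w_def l_def)
  have a0: "0 \<le> a" using a0' by (simp add: a_def)
  have sz: "\<And>z. z \<in> {lo..hi} \<Longrightarrow> s i th z = w * x i th z + l * (1 - x i th z)" using T by (simp add: w_def l_def)
  have "Umin lo hi P D eta x s i th = - l + (th - w + l) * Xm i th"
    unfolding Umin_def by (rule WL_Inf_pos[OF i th sz]) (simp_all add: a0')
  hence lq: "l = a * Xm i th - U i th" using Um by (simp add: a_def)
  have wq: "w = th - a + (a * Xm i th - U i th)" using lq by (simp add: a_def)
  have Ts: "Tint P s i th = th * XX i th - U i th - a * (XX i th - Xm i th)"
    using Tint_WL[of i th s w l, OF i th sz] lq wq by (simp add: algebra_simps)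
  have ale: "ast i th \<le> a"
  proof (cases "th \<le> thK i")
    case True thus ?thesis using ast_tl(1)[OF i th] a0 by simp
  next
    case False
    hence gt: "th > thK i" by simp
    have UK: "U i th > K" and Xp: "Xm i th > 0" using gt_thK[OF i th gt] by auto
    have XXp: "XX i th > 0" using Xp Xm_bounds(2)[OF i th] by simp
    obtain thw where thw: "thw \<in> {lo..hi}" "x i th thw = 1" using exists_win[OF i th XXp] by blast
    obtain thl where thl: "thl \<in> {lo..hi}" "x i th thl = 0" using exists_lose[OF i th XX_lt1[OF i th tlt]] by blast
    have "- s i th thl \<le> K" using Kl i th tlt thw thl unfolding K_limited_def by blast
    moreover have "s i th thl = l" using sz[OF thl(1)] thl(2) by simp
    ultimately have "- l \<le> K" by simp
    hence "U i th - K \<le> a * Xm i th" using lq by simp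
    hence "(U i th - K) / Xm i th \<le> a" using Xp by (simp add: divide_le_eq)
    thus ?thesis using ast_tl(1)[OF i th] False by simp
  qed
  show ?thesis
    by (rule that[OF a0 ale Ts]) (use sz lq wq in simp)
qed

lemma R_le:
  assumes "0 \<le> a" "ast i th \<le> a" "i \<in> {1,2}" "th \<in> {lo..hi}"
  shows "th * XX i th - U i th - a * (XX i th - Xm i th) \<le> Tint P ts i th"
proof -
  have "0 \<le> XX i th - Xm i th" using Xm_bounds(2)[OF assms(3,4)] by simp
  hence "ast i th * (XX i th - Xm i th) \<le> a * (XX i th - Xm i th)" using assms by (intro mult_right_mono)
  thus ?thesis using Tint_ts[OF assms(3,4)] by simp
qed

lemma row_eq:
  assumes i: "i \<in> {1,2}" and th: "th \<in> {lo..hi}" and tlt: "th < hi"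
    and a: "ast i th \<le> a"
    and sz: "\<And>z. z \<in> {lo..hi} \<Longrightarrow> s i th z = (th - a + (a * Xm i th - U i th)) * x i th z + (a * Xm i th - U i th) * (1 - x i th z)"
    and eq: "th * XX i th - U i th - a * (XX i th - Xm i th) = Tint P ts i th"
  shows "AE z in P. s i th z = ts i th z"
proof -
  have tsz: "\<And>z. ts i th z = (th - ast i th + (ast i th * Xm i th - U i th)) * x i th z + (ast i th * Xm i th - U i th) * (1 - x i th z)"
  proof -
    fix z
    have "twS i th = th - ast i th + tlS i th" by (simp add: ast_def)
    moreover have "tlS i th = ast i th * Xm i th - U i th" by (rule ast_tl(2)[OF i th])
    ultimately show "ts i th z = (th - ast i th + (ast i th * Xm i th - U i th)) * x i th z + (ast i th * Xm i th - U i th) * (1 - x i th z)"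
      unfolding ts_eq by simp
  qed
  show ?thesis
  proof (cases "XX i th = 0")
    case True
    hence X0: "Xm i th = 0" using Xm_bounds(1,2)[OF i th] by simp
    have Wn: "Wset i th \<in> null_sets P"
      using XX_W[OF i th] True Wset_sets[OF i th] sets_P by (simp add: Pp.emeasure_eq_measure null_sets_def)
    have "AE z in P. z \<notin> Wset i th" by (rule AE_not_in[OF Wn])
    with AE_neq[OF P_QS th] AE_space[of P] show ?thesis
    proof eventually_elim
      case (elim z)
      have z: "z \<in> {lo..hi}" using elim by simp
      have "x i th z = indicator (Wset i th) z" by (rule x_ind[OF i th z]) (use elim in simp)
      hence "x i th z = 0" using elim by simp
      thus ?case using sz[OF z] tsz[of z] X0 by simp
    qed
  next
    case False
    hence XXp: "XX i th > 0" using Xm_bounds(1,2)[OF i th] by simp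
    have "Xm i th < XX i th" by (rule Xm_strict[OF i th XXp XX_lt1[OF i th tlt]])
    moreover have "(a - ast i th) * (XX i th - Xm i th) = 0" using eq Tint_ts[OF i th] by (simp add: algebra_simps)
    ultimately have "a = ast i th" by simp
    thus ?thesis using sz tsz by (intro AE_I2) simp
  qed
qed

end

context ctx begin

interpretation Pp: prob_space P by (rule P_prob)

lemma P_row:
  assumes s: "transfer_rule lo hi s" and fe: "feasible lo hi P D eta x s" and Kl: "K_limited lo hi x K s"
    and i: "i \<in> {1,2}" and th: "th \<in> {lo..hi}" and tlt: "th < hi"
  shows "Tint P s i th \<le> Tint P ts i th"
proof -
  define u where "u = (\<lambda>z. th * x i th z - s i th z)"
  have bm: "bdd_meas2 lo hi s" using s by (simp add: transfer_rule_def)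
  obtain C where C: "\<And>a b. a \<in> {lo..hi} \<Longrightarrow> b \<in> {lo..hi} \<Longrightarrow> \<bar>s i a b\<bar> \<le> C"
    using sec_bound[OF bm i] by blast
  have um: "u \<in> borel_measurable B" unfolding u_def
    using x_meas[OF i th] sec_meas[OF bm i th] by (intro borel_measurable_diff borel_measurable_times borel_measurable_const)
  have ub: "\<And>z. z \<in> {lo..hi} \<Longrightarrow> \<bar>u z\<bar> \<le> hi + C"
  proof -
    fix z assume z: "z \<in> {lo..hi}"
    have "\<bar>th * x i th z\<bar> \<le> \<bar>th\<bar>" using x_bounds[OF i th z] by (simp add: abs_mult mult_left_le)
    moreover have "\<bar>th\<bar> \<le> hi" using th lo_pos by simp
    ultimately show "\<bar>u z\<bar> \<le> hi + C" using C[OF th z] unfolding u_def by linarith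
  qed
  have iu: "integrable P u" unfolding u_def by (rule tr_int[OF s P_QS i th])
  have Iu: "(\<integral>z. u z \<partial>P) = th * XX i th - Tint P s i th"
  proof -
    have "integrable P (s i th)" by (rule integrable_QS[OF P_QS sec_meas[OF bm i th], where C=C]) (use C th in auto)
    thus ?thesis unfolding u_def Tint_def Xint_def using integrable_x[OF P_QS i th] by simp
  qed
  have env: "U i th \<le> Umin lo hi P D eta x s i th" by (rule envelope[OF s fe i th])
  have Ule: "\<And>Q. Q \<in> QS \<Longrightarrow> U i th \<le> (\<integral>z. u z \<partial>Q)"
    using env Umin_le[OF s _ i th] unfolding u_def by (meson order_trans)
  show ?thesis
  proof (cases "th \<le> thK i")
    case True
    hence "ast i th = 0" using ast_tl(1)[OF i th] by simp
    hence "Tint P ts i th = th * XX i th - U i th" using Tint_ts[OF i th] by simp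
    thus ?thesis using Ule[OF P_QS] Iu by simp
  next
    case False
    hence gt: "th > thK i" by simp
    have UK: "U i th > K" and Xp: "Xm i th > 0" using gt_thK[OF i th gt] by auto
    have astq: "ast i th = (U i th - K) / Xm i th" using ast_tl(1)[OF i th] False by simp
    have XXp: "XX i th > 0" using Xp Xm_bounds(2)[OF i th] by simp
    have XX1: "XX i th < 1" by (rule XX_lt1[OF i th tlt])
    define W where "W = Wset i th"
    let ?L = "{lo..hi} - W"
    have W: "W \<in> sets B" unfolding W_def by (rule Wset_sets[OF i th])
    have Wsub: "W \<subseteq> {lo..hi}" using sets.sets_into_space[OF W] by simp
    have Lset: "?L \<in> sets B" using W sets.compl_sets[OF W] by simp
    have pW: "measure P W = XX i th" unfolding W_def by (rule XX_W[OF i th, symmetric])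
    have pL: "measure P ?L = 1 - XX i th" using Pp.prob_compl[of W] W sets_P pW by simp
    have iWu: "integrable P (\<lambda>z. indicator W z * u z)"
    proof (rule integrable_QS[OF P_QS, where C="hi + C"])
      show "(\<lambda>z. indicator W z * u z) \<in> borel_measurable B" using W um by (intro borel_measurable_times borel_measurable_indicator) auto
      fix z assume "z \<in> {lo..hi}" thus "\<bar>indicator W z * u z\<bar> \<le> hi + C" using ub[of z] C[OF th, of z] by (auto simp: indicator_def)
    qed
    have iLu: "integrable P (\<lambda>z. indicator ?L z * u z)"
    proof (rule integrable_QS[OF P_QS, where C="hi + C"])
      show "(\<lambda>z. indicator ?L z * u z) \<in> borel_measurable B" using Lset um by (intro borel_measurable_times borel_measurable_indicator) auto
      fix z assume "z \<in> {lo..hi}" thus "\<bar>indicator ?L z * u z\<bar> \<le> hi + C" using ub[of z] C[OF th, of z] by (auto simp: indicator_def)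
    qed
    define A where "A = (\<integral>z. indicator W z * u z \<partial>P)"
    define Bv where "Bv = (\<integral>z. indicator ?L z * u z \<partial>P)"
    have AB: "(\<integral>z. u z \<partial>P) = A + Bv"
    proof -
      have "(\<integral>z. u z \<partial>P) = (\<integral>z. indicator W z * u z + indicator ?L z * u z \<partial>P)"
        using Wsub by (intro Bochner_Integration.integral_cong) (auto simp: indicator_def)
      thus ?thesis using iWu iLu by (simp add: A_def Bv_def)
    qed
    obtain thw where thw: "thw \<in> {lo..hi}" "x i th thw = 1" using exists_win[OF i th XXp] by blast
    have BvK: "Bv \<le> K * (1 - XX i th)"
    proof -
      have "Bv \<le> (\<integral>z. K * indicator ?L z \<partial>P)"
        unfolding Bv_def
      proof (rule integral_mono_AE[OF iLu])
        have "integrable P (indicator ?L :: real \<Rightarrow> real)"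
          using Lset sets_P by (intro integrable_real_indicator) (auto simp: Pp.emeasure_eq_measure)
        thus "integrable P (\<lambda>z. K * indicator ?L z)" by simp
        show "AE z in P. indicator ?L z * u z \<le> K * indicator ?L z"
          using AE_neq[OF P_QS th] AE_space[of P]
        proof eventually_elim
          case (elim z)
          have z: "z \<in> {lo..hi}" using elim by simp
          show ?case
          proof (cases "z \<in> W")
            case True thus ?thesis by simp
          next
            case False
            have "x i th z = indicator W z" unfolding W_def by (rule x_ind[OF i th z]) (use elim in simp)
            hence x0: "x i th z = 0" using False by simp
            have "- s i th z \<le> K" using Kl i th tlt thw z x0 unfolding K_limited_def by blast
            thus ?thesis using False z x0 by (simp add: u_def)
          qed
        qed
      qed
      also have "\<dots> = K * (1 - XX i th)"
      proof -
        have "?L \<inter> space P = ?L" by auto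
        thus ?thesis using pL by simp
      qed
      finally show ?thesis .
    qed
    define uW where "uW = A / XX i th"
    define uL where "uL = Bv / (1 - XX i th)"
    define b where "b = uW - uL"
    have uLK: "uL \<le> K" using BvK XX1 by (simp add: uL_def divide_le_eq)
    have eA: "A = uW * XX i th" using XXp by (simp add: uW_def)
    have eB: "Bv = uL * (1 - XX i th)" using XX1 by (simp add: uL_def)
    have IuP: "(\<integral>z. u z \<partial>P) = uL + b * XX i th"
      unfolding AB eA eB b_def by (simp add: algebra_simps)
    have key: "\<And>Q. Q \<in> QS \<Longrightarrow> U i th \<le> uL + b * (\<integral>z. x i th z \<partial>Q)"
    proof -
      fix Q assume Q: "Q \<in> QS"
      define q where "q = measure Q W"
      have qx: "(\<integral>z. x i th z \<partial>Q) = q" unfolding q_def W_def by (rule int_x_W[OF Q i th])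
      define h where "h = (\<lambda>z. measure Q W / measure P W * indicator W z
                  + (1 - measure Q W) / (1 - measure P W) * indicator ({lo..hi} - W) z)"
      have p01: "0 < measure P W" "measure P W < 1" using pW XXp XX1 by auto
      have Q'QS: "density P (\<lambda>z. ennreal (h z)) \<in> QS" unfolding h_def by (rule coarsen(1)[OF W p01 Q])
      have Q'int: "(\<integral>z. u z \<partial>density P (\<lambda>z. ennreal (h z))) = (\<integral>z. h z * u z \<partial>P)"
        unfolding h_def by (rule coarsen(2)[OF W p01 Q um])
      have "(\<integral>z. h z * u z \<partial>P) = (\<integral>z. q / XX i th * (indicator W z * u z) + (1 - q) / (1 - XX i th) * (indicator ?L z * u z) \<partial>P)"
        unfolding h_def q_def pW by (intro Bochner_Integration.integral_cong) (auto simp: algebra_simps)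
      also have "\<dots> = q / XX i th * A + (1 - q) / (1 - XX i th) * Bv"
        using iWu iLu by (simp add: A_def Bv_def)
      also have "\<dots> = uL + b * q"
      proof -
        have "q / XX i th * A = q * uW" unfolding eA using XXp by simp
        moreover have "(1 - q) / (1 - XX i th) * Bv = (1 - q) * uL" unfolding eB using XX1 by simp
        ultimately show ?thesis by (simp add: b_def algebra_simps)
      qed
      finally have "(\<integral>z. u z \<partial>density P (\<lambda>z. ennreal (h z))) = uL + b * q" using Q'int by simp
      thus "U i th \<le> uL + b * (\<integral>z. x i th z \<partial>Q)" using Ule[OF Q'QS] qx by simp
    qed
    have b0: "0 \<le> b"
    proof (rule ccontr)
      assume "\<not> 0 \<le> b"
      hence "b * XX i th \<le> 0" using XXp by (simp add: mult_nonpos_nonneg)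
      hence "U i th \<le> uL" using key[OF P_QS] by (simp add: Xint_def)
      thus False using uLK UK by simp
    qed
    have "U i th - uL \<le> Inf ((\<lambda>Q. 0 + b * (\<integral>z. x i th z \<partial>Q)) ` QS)"
      using key QS_ne by (intro cInf_greatest) force+
    also have "\<dots> = 0 + b * Xm i th" unfolding Xmin_def
      by (rule Inf_affine[OF QS_ne _ b0, where m=0]) (use int_x_bounds i th in auto)
    finally have bX: "U i th - uL \<le> b * Xm i th" by simp
    have "U i th - K \<le> b * Xm i th" using bX uLK by simp
    hence ab: "ast i th \<le> b" unfolding astq using Xp by (simp add: divide_le_eq)
    have "ast i th * (XX i th - Xm i th) \<le> b * (XX i th - Xm i th)"
      using ab Xm_bounds(2)[OF i th] by (intro mult_right_mono) auto
    hence "U i th + ast i th * (XX i th - Xm i th) \<le> (\<integral>z. u z \<partial>P)"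
      using IuP bX by (simp add: algebra_simps)
    thus ?thesis using Iu Tint_ts[OF i th] by simp
  qed
qed

end

context ctx begin

interpretation Pp: prob_space P by (rule P_prob)

lemma sfP: "sigma_finite_measure P" by (rule prob_space_imp_sigma_finite[OF P_prob])

lemma prod_meas:
  assumes s: "transfer_rule lo hi s" and i: "i \<in> {1,2}"
  shows "(\<lambda>(a,b). s i a b) \<in> borel_measurable (P \<Otimes>\<^sub>M P)"
proof -
  have "(\<lambda>(a,b). s i a b) \<in> borel_measurable (B \<Otimes>\<^sub>M B)"
    using s i unfolding transfer_rule_def bdd_meas2_def by blast
  moreover have "sets (P \<Otimes>\<^sub>M P) = sets (B \<Otimes>\<^sub>M B)" using sets_P by (rule sets_pair_measure_cong) (rule sets_P)
  ultimately show ?thesis using measurable_cong_sets by blast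
qed

lemma Tint_meas:
  assumes s: "transfer_rule lo hi s" and i: "i \<in> {1,2}"
  shows "Tint P s i \<in> borel_measurable P"
proof -
  have "(\<lambda>th. \<integral>z. s i th z \<partial>P) \<in> borel_measurable P"
    by (rule sigma_finite_measure.borel_measurable_lebesgue_integral[OF sfP prod_meas[OF s i]])
  thus ?thesis by (simp add: Tint_def[abs_def])
qed

lemma Tint_integrable:
  assumes s: "transfer_rule lo hi s" and i: "i \<in> {1,2}"
  shows "integrable P (Tint P s i)"
proof -
  have bm: "bdd_meas2 lo hi s" using s by (simp add: transfer_rule_def)
  obtain C where C: "\<And>a b. a \<in> {lo..hi} \<Longrightarrow> b \<in> {lo..hi} \<Longrightarrow> \<bar>s i a b\<bar> \<le> C"
    using sec_bound[OF bm i] by blast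
  show ?thesis
  proof (rule Pp.integrable_const_bound[where B=C])
    show "Tint P s i \<in> borel_measurable P" by (rule Tint_meas[OF s i])
    show "AE th in P. norm (Tint P s i th) \<le> C"
    proof (rule AE_I2)
      fix th assume "th \<in> space P"
      hence th: "th \<in> {lo..hi}" by simp
      have "\<bar>Tint P s i th\<bar> \<le> (\<integral>z. \<bar>s i th z\<bar> \<partial>P)" unfolding Tint_def by (rule integral_abs_bound)
      also have "\<dots> \<le> (\<integral>z. C \<partial>P)"
      proof (rule integral_mono)
        show "integrable P (\<lambda>z. \<bar>s i th z\<bar>)"
          by (rule integrable_QS[OF P_QS, where C=C]) (use C th sec_meas[OF bm i th] in auto)
      qed (use C th in auto)
      finally show "norm (Tint P s i th) \<le> C" using Pp.prob_space by simp
    qed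
  qed
qed

lemma obj_le:
  assumes s: "transfer_rule lo hi s" and t: "transfer_rule lo hi t"
    and row: "\<And>i th. i \<in> {1,2} \<Longrightarrow> th \<in> {lo..hi} \<Longrightarrow> th < hi \<Longrightarrow> Tint P s i th \<le> Tint P t i th"
  shows "\<And>i. i \<in> {1,2} \<Longrightarrow> (\<integral>th. Tint P s i th \<partial>P) \<le> (\<integral>th. Tint P t i th \<partial>P)"
    "objective P s \<le> objective P t"
proof -
  show le: "\<And>i. i \<in> {1,2} \<Longrightarrow> (\<integral>th. Tint P s i th \<partial>P) \<le> (\<integral>th. Tint P t i th \<partial>P)"
  proof -
    fix i :: nat assume i: "i \<in> {1,2}"
    show "(\<integral>th. Tint P s i th \<partial>P) \<le> (\<integral>th. Tint P t i th \<partial>P)"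
    proof (rule integral_mono_AE[OF Tint_integrable[OF s i] Tint_integrable[OF t i]])
      have "hi \<in> {lo..hi}" using lohi by simp
      from AE_neq[OF P_QS this] AE_space[of P]
      show "AE th in P. Tint P s i th \<le> Tint P t i th"
        by eventually_elim (use row[OF i] in auto)
    qed
  qed
  show "objective P s \<le> objective P t"
    unfolding objective_def using le[of 1] le[of 2] by simp
qed

end

context ctx begin

interpretation Pp: prob_space P by (rule P_prob)

definition "admR s \<longleftrightarrow> transfer_rule lo hi s \<and> win_lose_dependent lo hi x s \<and>
                   (\<forall>i\<in>{1,2::nat}. \<forall>th\<in>{lo..hi}.
                      Umin lo hi P D eta x s i th = integral {lo..th} (Xmin lo hi P D eta x i)) \<and>
                   K_limited lo hi x K s"

definition "admP s \<longleftrightarrow> transfer_rule lo hi s \<and> feasible lo hi P D eta x s \<and> K_limited lo hi x K s"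

lemma admR_ts: "admR ts"
  unfolding admR_def
proof (intro conjI ballI)
  show "transfer_rule lo hi ts" by (rule ts_transfer)
  show "win_lose_dependent lo hi x ts" by (rule ts_wl)
  show "K_limited lo hi x K ts" by (rule ts_Klim)
  fix i th assume i: "i \<in> {1,2::nat}" and th: "th \<in> {lo..hi}"
  show "Umin lo hi P D eta x ts i th = integral {lo..th} (Xm i)" using ts_Umin[OF i th] unfolding U_def .
qed

lemma admP_ts: "admP ts"
  unfolding admP_def feasible_def using ts_transfer ts_IC ts_IR ts_Klim by blast

lemma admR_row:
  assumes "admR s" and i: "i \<in> {1,2}" and th: "th \<in> {lo..hi}" and tlt: "th < hi"
  shows "\<exists>a. 0 \<le> a \<and> ast i th \<le> a \<and>
    Tint P s i th = th * XX i th - U i th - a * (XX i th - Xm i th) \<and>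
    (\<forall>z\<in>{lo..hi}. s i th z = (th - a + (a * Xm i th - U i th)) * x i th z + (a * Xm i th - U i th) * (1 - x i th z))"
proof -
  have s: "transfer_rule lo hi s" and wl: "win_lose_dependent lo hi x s" and Kl: "K_limited lo hi x K s"
    and Um: "Umin lo hi P D eta x s i th = U i th"
    using assms unfolding admR_def U_def by blast+
  show ?thesis
  proof (rule R_row[OF s wl Um Kl i th tlt])
    fix a assume "0 \<le> a" "ast i th \<le> a"
      "Tint P s i th = th * XX i th - U i th - a * (XX i th - Xm i th)"
      "\<And>z. z \<in> {lo..hi} \<Longrightarrow> s i th z = (th - a + (a * Xm i th - U i th)) * x i th z + (a * Xm i th - U i th) * (1 - x i th z)"
    thus ?thesis by blast
  qed
qed

lemma admR_opt: "admR s \<Longrightarrow> objective P s \<le> objective P ts"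
proof -
  assume a: "admR s"
  have s: "transfer_rule lo hi s" using a unfolding admR_def by blast
  show ?thesis
  proof (rule obj_le(2)[OF s ts_transfer])
    fix i th assume i: "i \<in> {1,2::nat}" and th: "th \<in> {lo..hi}" and tlt: "th < hi"
    obtain b where b: "0 \<le> b" "ast i th \<le> b" "Tint P s i th = th * XX i th - U i th - b * (XX i th - Xm i th)"
      "\<And>z. z \<in> {lo..hi} \<Longrightarrow> s i th z = (th - b + (b * Xm i th - U i th)) * x i th z + (b * Xm i th - U i th) * (1 - x i th z)"
      using admR_row[OF a i th tlt] by blast
    show "Tint P s i th \<le> Tint P ts i th" using R_le[OF b(1,2) i th] b(3) by simp
  qed
qed

lemma admP_opt: "admP s \<Longrightarrow> objective P s \<le> objective P ts"
proof -
  assume a: "admP s"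
  have s: "transfer_rule lo hi s" and fe: "feasible lo hi P D eta x s" and Kl: "K_limited lo hi x K s"
    using a unfolding admP_def by blast+
  show ?thesis
    by (rule obj_le(2)[OF s ts_transfer]) (rule P_row[OF s fe Kl])
qed

lemma unique:
  assumes a: "admR t" and opt: "objective P ts \<le> objective P t" and i: "i \<in> {1,2}"
  shows "AE z in P \<Otimes>\<^sub>M P. t i (fst z) (snd z) = ts i (fst z) (snd z)"
proof -
  have t: "transfer_rule lo hi t" using a unfolding admR_def by blast
  have row: "\<And>i th. i \<in> {1,2} \<Longrightarrow> th \<in> {lo..hi} \<Longrightarrow> th < hi \<Longrightarrow> Tint P t i th \<le> Tint P ts i th"
  proof -
    fix i th assume i: "i \<in> {1,2::nat}" and th: "th \<in> {lo..hi}" and tlt: "th < hi"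
    obtain b where b: "0 \<le> b" "ast i th \<le> b" "Tint P t i th = th * XX i th - U i th - b * (XX i th - Xm i th)"
      "\<And>z. z \<in> {lo..hi} \<Longrightarrow> t i th z = (th - b + (b * Xm i th - U i th)) * x i th z + (b * Xm i th - U i th) * (1 - x i th z)"
      using admR_row[OF a i th tlt] by blast
    show "Tint P t i th \<le> Tint P ts i th" using R_le[OF b(1,2) i th] b(3) by simp
  qed
  note le = obj_le(1)[OF t ts_transfer row]
  have eqi: "(\<integral>th. Tint P t i th \<partial>P) = (\<integral>th. Tint P ts i th \<partial>P)"
  proof -
    have "objective P t \<le> objective P ts" by (rule admR_opt[OF a])
    hence s2: "(\<integral>th. Tint P t 1 th \<partial>P) + (\<integral>th. Tint P t 2 th \<partial>P) = (\<integral>th. Tint P ts 1 th \<partial>P) + (\<integral>th. Tint P ts 2 th \<partial>P)"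
      using opt unfolding objective_def by simp
    show ?thesis using le[of 1] le[of 2] s2 i by auto
  qed
  have hi_in: "hi \<in> {lo..hi}" using lohi by simp
  have ae0: "AE th in P. Tint P ts i th - Tint P t i th = 0"
  proof -
    have "integrable P (\<lambda>th. Tint P ts i th - Tint P t i th)"
      using Tint_integrable[OF ts_transfer i] Tint_integrable[OF t i] by simp
    moreover have "AE th in P. 0 \<le> Tint P ts i th - Tint P t i th"
      using AE_neq[OF P_QS hi_in] AE_space[of P] by eventually_elim (use row[OF i] in auto)
    moreover have "(\<integral>th. Tint P ts i th - Tint P t i th \<partial>P) = 0"
      using eqi Tint_integrable[OF ts_transfer i] Tint_integrable[OF t i] by simp
    ultimately show ?thesis using integral_nonneg_eq_0_iff_AE by blast
  qed
  have ae: "AE th in P. AE z in P. t i th z = ts i th z"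
    using ae0 AE_neq[OF P_QS hi_in] AE_space[of P]
  proof eventually_elim
    case (elim th)
    have th: "th \<in> {lo..hi}" and tlt: "th < hi" using elim by auto
    obtain b where b: "0 \<le> b" "ast i th \<le> b" "Tint P t i th = th * XX i th - U i th - b * (XX i th - Xm i th)"
      "\<And>z. z \<in> {lo..hi} \<Longrightarrow> t i th z = (th - b + (b * Xm i th - U i th)) * x i th z + (b * Xm i th - U i th) * (1 - x i th z)"
      using admR_row[OF a i th tlt] by blast
    have "th * XX i th - U i th - b * (XX i th - Xm i th) = Tint P ts i th" using b(3) elim by simp
    from row_eq[where s=t, OF i th tlt b(2) b(4) this] show ?case by simp
  qed
  interpret pp: pair_sigma_finite P P by (simp add: pair_sigma_finite_def sfP)
  show ?thesis
  proof (rule pp.AE_pair_measure)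
    have m1: "(\<lambda>z. t i (fst z) (snd z)) \<in> borel_measurable (P \<Otimes>\<^sub>M P)"
      using prod_meas[OF t i] by (simp add: case_prod_beta')
    have m2: "(\<lambda>z. ts i (fst z) (snd z)) \<in> borel_measurable (P \<Otimes>\<^sub>M P)"
      using prod_meas[OF ts_transfer i] by (simp add: case_prod_beta')
    show "{z \<in> space (P \<Otimes>\<^sub>M P). t i (fst z) (snd z) = ts i (fst z) (snd z)} \<in> sets (P \<Otimes>\<^sub>M P)"
      by (rule borel_measurable_eq[OF m1 m2])
    show "AE th in P. AE z in P. t i (fst (th, z)) (snd (th, z)) = ts i (fst (th, z)) (snd (th, z))"
      using ae by simp
  qed
qed

end

theorem proposition3:
  fixes lo hi eta K :: real
    and P :: "real measure"
    and D :: "real measure \<Rightarrow> real measure \<Rightarrow> ennreal"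
    and x :: "nat \<Rightarrow> real \<Rightarrow> real \<Rightarrow> real"
  assumes "0 < lo" and "lo < hi"
    and "Delta lo hi (sets (BTheta lo hi)) P"
    and "\<forall>th. emeasure P {th} = 0"
    and "eta > 0"
    and "assumption_D lo hi D"
    and "allocation_rule lo hi x"
    and "assumption_X lo hi P D eta x"
    and "K \<ge> 0"
  shows "solves_R lo hi P D eta x K (t_star lo hi P D eta x K)
    \<and> (\<forall>t. solves_R lo hi P D eta x K t \<longrightarrow>
          (\<forall>i\<in>{1,2::nat}. AE z in P \<Otimes>\<^sub>M P. t i (fst z) (snd z) = t_star lo hi P D eta x K i (fst z) (snd z)))
    \<and> solves_P lo hi P D eta x K (t_star lo hi P D eta x K)"
proof -
  interpret ctx lo hi P D eta x K using assms by (simp add: ctx_def)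
  have R: "solves_R lo hi P D eta x K ts"
    unfolding solves_R_def Let_def using admR_ts admR_opt unfolding admR_def by blast
  have U: "\<forall>t. solves_R lo hi P D eta x K t \<longrightarrow>
          (\<forall>i\<in>{1,2::nat}. AE z in P \<Otimes>\<^sub>M P. t i (fst z) (snd z) = ts i (fst z) (snd z))"
  proof (intro allI impI ballI)
    fix t i assume sR: "solves_R lo hi P D eta x K t" and i: "i \<in> {1,2::nat}"
    have a: "admR t" and opt: "\<And>s. admR s \<Longrightarrow> objective P s \<le> objective P t"
      using sR unfolding solves_R_def Let_def admR_def by blast+
    show "AE z in P \<Otimes>\<^sub>M P. t i (fst z) (snd z) = ts i (fst z) (snd z)"
      by (rule unique[OF a opt[OF admR_ts] i])
  qed
  have Pr: "solves_P lo hi P D eta x K ts"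
    unfolding solves_P_def Let_def using admP_ts admP_opt unfolding admP_def by blast
  show ?thesis using R U Pr by blast
qed

end
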